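(* Let $\alpha_1,\dots,\alpha_N>0$, $A=\sum_{i=1}^N\frac1{\alpha_i}$, and $c(x_1,\dots,x_N)=\sum_{j=1}^nx_{1,j}^{1/\alpha_1}\cdots x_{N,j}^{1/\alpha_N}$ for $x_i\in\mathbb{R}_+^n=(0,\infty)^n$. Let $f_i:\mathbb{R}_+^n\to[0,\infty)$ and $\rho:(0,\infty)\to[0,\infty)$ be Borel functions with $\prod_{i=1}^Nf_i(x_i)^{1/\alpha_i}\le\rho(c(x))$ for all $x_1,\dots,x_N\in\mathbb{R}^n_+$. Let $m=e^{-V}dx$ on $\mathbb{R}_+^n$, where $V:\mathbb{R}_+^n\to(-\infty,\infty]$ is such that $(t_1,\dots,t_n)\mapsto V(e^{t_1},\dots,e^{t_n})$ is convex on $\mathbb{R}^n$. Then $$\prod_{i=1}^N\Bigl(\int_{\mathbb{R}_+^n}f_i\,dm\Bigr)^{1/\alpha_i}\le\Bigl(\int_{\mathbb{R}^n_+}\rho^{1/A}\Bigl(\sum_{j=1}^nt_j^A\Bigr)m(dt)\Bigr)^A.$$ In particular, if $V_i:\mathbb{R}^n_+\to(-\infty,\infty]$ satisfy $\sum_iV_i(x_i)\ge c(x)$ for all $x$, then $$\prod_{i=1}^N\Bigl(\int_{\mathbb{R}^n_+}e^{-\alpha_iV_i}dm\Bigr)^{1/\alpha_i}\le\Bigl(\int_{\mathbb{R}^n_+}e^{-\frac1A\sum_{j=1}^nt_j^A}m(dt)\Bigr)^A.$$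
   Context: For $x_i\in\mathbb{R}^n$ write $x_i=(x_{i,1},\dots,x_{i,n})$. *)

theory Defs
  imports "HOL-Analysis.Analysis"
begin

definition pos_orthant :: "(real ^ 'n) set" where
  "pos_orthant = {x. \<forall>j. 0 < x $ j}"

definition cost :: "nat \<Rightarrow> (nat \<Rightarrow> real) \<Rightarrow> (nat \<Rightarrow> real ^ 'n) \<Rightarrow> real" where
  "cost N \<alpha> x = (\<Sum>j\<in>UNIV. \<Prod>i<N. (x i $ j) powr (1 / \<alpha> i))"

definition emexp :: "ereal \<Rightarrow> ennreal" where
  "emexp v = (if v = \<infinity> then 0 else if v = -\<infinity> then \<infinity> else ennreal (exp (- real_of_ereal v)))"

definition epowr :: "ennreal \<Rightarrow> real \<Rightarrow> ennreal" (infixr "epowr" 80) where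
  "a epowr p = (if a = \<infinity> then \<infinity> else ennreal (enn2real a powr p))"

definition ereal_convex_on :: "'a::real_vector set \<Rightarrow> ('a \<Rightarrow> ereal) \<Rightarrow> bool" where
  "ereal_convex_on S g \<longleftrightarrow> (\<forall>s\<in>S. \<forall>t\<in>S. \<forall>u::real. 0 < u \<and> u < 1 \<longrightarrow>
      g (u *\<^sub>R s + (1 - u) *\<^sub>R t) \<le> ereal u * g s + ereal (1 - u) * g t)"

definition meas_V :: "(real ^ 'n \<Rightarrow> ereal) \<Rightarrow> (real ^ 'n) measure" where
  "meas_V V = density lebesgue (\<lambda>x. indicator pos_orthant x * emexp (V x))"

end

theory Submission
  imports Defs
begin

lemma epowr_top[simp]: "top epowr p = top"
  by (simp add: epowr_def)

lemma epowr_ennreal[simp]: "0 \<le> r \<Longrightarrow> ennreal r epowr p = ennreal (r powr p)"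
  by (simp add: epowr_def)

lemma epowr_0[simp]: "0 epowr p = 0"
  by (simp add: epowr_def)

lemma epowr_1[simp]: "a epowr 1 = a"
  by (cases a) (auto simp: epowr_def)

lemma epowr_cases:
  obtains (top) "a = top" | (fin) r where "a = ennreal r" "0 \<le> r"
  by (cases a) auto

lemma epowr_pos: "0 < p \<Longrightarrow> (a epowr p = 0) \<longleftrightarrow> a = 0"
  by (cases a rule: epowr_cases) auto

lemma epowr_top_iff: "(a epowr p = top) \<longleftrightarrow> a = top"
  by (cases a rule: epowr_cases) auto

lemma epowr_mono: "a \<le> b \<Longrightarrow> 0 \<le> p \<Longrightarrow> a epowr p \<le> b epowr p"
proof (cases b rule: epowr_cases)
  case top then show ?thesis by simp
next
  case (fin s)
  assume "a \<le> b" "0 \<le> p"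
  then obtain r where "a = ennreal r" "0 \<le> r" "r \<le> s"
    using fin by (cases a rule: epowr_cases) (auto simp: ennreal_le_iff top_unique)
  then show ?thesis using fin \<open>0 \<le> p\<close> by (auto intro!: ennreal_leI powr_mono2)
qed

lemma epowr_mult: "0 < p \<Longrightarrow> (a * b) epowr p = a epowr p * b epowr p"
proof (cases a rule: epowr_cases)
  case top
  assume p: "0 < p"
  show ?thesis
  proof (cases "b = 0")
    case True then show ?thesis by simp
  next
    case False then show ?thesis using top p by (simp add: ennreal_mult_top epowr_pos)
  qed
next
  case (fin r)
  note ar = fin
  assume p: "0 < p"
  show ?thesis
  proof (cases b rule: epowr_cases)
    case top
    then show ?thesis using ar p
      by (cases "r = 0") (auto simp: ennreal_top_mult ennreal_mult_top)
  next
    case (fin s)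
    then show ?thesis using ar p by (simp add: ennreal_mult[symmetric] powr_mult)
  qed
qed

lemma epowr_epowr: "0 < p \<Longrightarrow> 0 < q \<Longrightarrow> (a epowr p) epowr q = a epowr (p * q)"
  by (cases a rule: epowr_cases) (auto simp: powr_powr)

lemma epowr_add: "0 < p \<Longrightarrow> 0 < q \<Longrightarrow> a epowr p * a epowr q = a epowr (p + q)"
  by (cases a rule: epowr_cases)
     (auto simp: powr_add ennreal_mult[symmetric] epowr_pos)

lemma prod_epowr: "0 < p \<Longrightarrow> (\<Prod>i\<in>S. f i) epowr p = (\<Prod>i\<in>S. f i epowr p)"
proof (induction S rule: infinite_finite_induct)
  case (insert x F)
  then show ?case by (simp add: epowr_mult)
qed (auto simp: epowr_def)

lemma prod_epowr_const:
  assumes "finite S" "S \<noteq> {}" "\<forall>i\<in>S. 0 < l i"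
  shows "(\<Prod>i\<in>S. a epowr l i) = a epowr (\<Sum>i\<in>S. l i)"
  using assms
proof (induction S rule: finite_ne_induct)
  case (insert x F)
  then show ?case by (simp add: epowr_add sum_pos)
qed simp

lemma prod_epowr_mono:
  assumes "\<forall>i\<in>S. a i \<le> b i" "\<forall>i\<in>S. 0 \<le> l i"
  shows "(\<Prod>i\<in>S. a i epowr l i) \<le> (\<Prod>i\<in>S. b i epowr l i)"
  using assms by (intro prod_mono_ennreal) (auto intro: epowr_mono)

lemma amgm_real:
  fixes x l :: "'i \<Rightarrow> real"
  assumes S: "finite S" "S \<noteq> {}" and x: "\<forall>i\<in>S. 0 \<le> x i" and l: "\<forall>i\<in>S. 0 < l i"
    and l1: "(\<Sum>i\<in>S. l i) = 1"
  shows "(\<Prod>i\<in>S. x i powr l i) \<le> (\<Sum>i\<in>S. l i * x i)"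
proof (cases "\<exists>i\<in>S. x i = 0")
  case True
  then have "(\<Prod>i\<in>S. x i powr l i) = 0" using S by (auto intro: prod_zero)
  then show ?thesis using x l by (auto intro!: sum_nonneg)
next
  case False
  then have xp: "\<forall>i\<in>S. 0 < x i" using x by force
  have "exp (\<Sum>i\<in>S. l i *\<^sub>R ln (x i)) \<le> (\<Sum>i\<in>S. l i * exp (ln (x i)))"
    by (rule convex_on_sum[OF S exp_convex l1]) (use l in auto)
  moreover have "exp (\<Sum>i\<in>S. l i *\<^sub>R ln (x i)) = (\<Prod>i\<in>S. exp (l i * ln (x i)))"
    using S by (simp add: exp_sum)
  moreover have "(\<Prod>i\<in>S. exp (l i * ln (x i))) = (\<Prod>i\<in>S. x i powr l i)"
    using xp by (intro prod.cong) (auto simp: powr_def)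
  moreover have "(\<Sum>i\<in>S. l i * exp (ln (x i))) = (\<Sum>i\<in>S. l i * x i)"
    using xp by simp
  ultimately show ?thesis by simp
qed

lemma amgm_ennreal:
  fixes x :: "'i \<Rightarrow> ennreal" and l :: "'i \<Rightarrow> real"
  assumes S: "finite S" "S \<noteq> {}" and l: "\<forall>i\<in>S. 0 < l i"
    and l1: "(\<Sum>i\<in>S. l i) = 1"
  shows "(\<Prod>i\<in>S. x i epowr l i) \<le> (\<Sum>i\<in>S. ennreal (l i) * x i)"
proof (cases "\<exists>i\<in>S. x i = top")
  case True
  then obtain j where j: "j \<in> S" "x j = top" by auto
  have "top = ennreal (l j) * x j" using j l by (simp add: ennreal_mult_top ennreal_eq_0_iff not_le)
  also have "\<dots> \<le> (\<Sum>i\<in>S. ennreal (l i) * x i)"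
    using j S by (intro member_le_sum) auto
  finally show ?thesis by (simp add: top_unique)
next
  case False
  define r where "r i = enn2real (x i)" for i
  have xr: "\<forall>i\<in>S. x i = ennreal (r i)" using False unfolding r_def
    by (auto simp: less_top)
  have r0: "\<forall>i\<in>S. 0 \<le> r i" unfolding r_def by simp
  have "(\<Prod>i\<in>S. x i epowr l i) = (\<Prod>i\<in>S. ennreal (r i powr l i))"
    using xr r0 by (intro prod.cong) auto
  also have "\<dots> = ennreal (\<Prod>i\<in>S. r i powr l i)" by (simp add: prod_ennreal)
  also have "\<dots> \<le> ennreal (\<Sum>i\<in>S. l i * r i)"
    by (intro ennreal_leI amgm_real[OF S]) (use r0 l l1 in auto)
  also have "\<dots> = (\<Sum>i\<in>S. ennreal (l i) * x i)"
    using xr r0 l by (subst sum_ennreal[symmetric]) (auto intro!: sum.cong simp: ennreal_mult)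
  finally show ?thesis .
qed

lemma SUP_mult_incseq:
  fixes a b :: "nat \<Rightarrow> ennreal"
  assumes a: "incseq a" and b: "incseq b"
  shows "(SUP k. a k * b k) = (SUP k. a k) * (SUP k. b k)"
proof (rule antisym)
  show "(SUP k. a k * b k) \<le> (SUP k. a k) * (SUP k. b k)"
    by (intro SUP_least mult_mono SUP_upper) auto
  have "(SUP k. a k) * (SUP k. b k) = (SUP i. SUP j. a i * b j)"
    by (simp add: SUP_mult_left_ennreal SUP_mult_right_ennreal) (rule SUP_commute)
  also have "\<dots> \<le> (SUP k. a k * b k)"
  proof (intro SUP_least)
    fix i j
    have "a i * b j \<le> a (max i j) * b (max i j)"
      using a b by (intro mult_mono) (auto simp: incseq_def)
    also have "\<dots> \<le> (SUP k. a k * b k)" by (rule SUP_upper) auto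
    finally show "a i * b j \<le> (SUP k. a k * b k)" .
  qed
  finally show "(SUP k. a k) * (SUP k. b k) \<le> (SUP k. a k * b k)" .
qed

lemma SUP_prod_incseq:
  fixes f :: "'i \<Rightarrow> nat \<Rightarrow> ennreal"
  assumes "finite S" "\<forall>i\<in>S. incseq (f i)"
  shows "(SUP k. \<Prod>i\<in>S. f i k) = (\<Prod>i\<in>S. SUP k. f i k)"
  using assms
proof (induction S rule: finite_induct)
  case empty then show ?case by simp
next
  case (insert x F)
  have inc: "incseq (\<lambda>k. \<Prod>i\<in>F. f i k)"
    using insert by (auto simp: incseq_def intro!: prod_mono_ennreal)
  have "(SUP k. \<Prod>i\<in>insert x F. f i k) = (SUP k. f x k * (\<Prod>i\<in>F. f i k))"
    using insert by simp
  also have "\<dots> = (SUP k. f x k) * (SUP k. \<Prod>i\<in>F. f i k)"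
    using insert inc by (intro SUP_mult_incseq) auto
  finally show ?case using insert by simp
qed

lemma SUP_epowr_incseq:
  fixes a :: "nat \<Rightarrow> ennreal"
  assumes a: "incseq a" and p: "0 < p"
  shows "(SUP k. a k) epowr p = (SUP k. a k epowr p)"
proof (rule antisym)
  show "(SUP k. a k epowr p) \<le> (SUP k. a k) epowr p"
    using p by (intro SUP_least epowr_mono SUP_upper) auto
next
  show "(SUP k. a k) epowr p \<le> (SUP k. a k epowr p)"
  proof (cases "(SUP k. a k) = top")
    case True
    show ?thesis
    proof (cases "\<exists>k. a k = top")
      case True
      then obtain k where "a k = top" by auto
      then have "top \<le> (SUP k. a k epowr p)" by (metis UNIV_I SUP_upper epowr_top)
      then show ?thesis by (metis top_greatest top_unique)
    next
      case False
      have "(SUP k. a k epowr p) = top"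
      proof (rule ennreal_SUP_eq_top)
        fix n :: nat
        have "ennreal (real n powr (1/p)) < (SUP k. a k)" using True by (metis ennreal_less_top)
        then obtain k where k: "ennreal (real n powr (1/p)) < a k" by (auto simp: less_SUP_iff)
        from False have "a k \<noteq> top" by auto
        then obtain r where r: "a k = ennreal r" "0 \<le> r" by (cases "a k" rule: epowr_cases) auto
        with k have "real n powr (1/p) < r" by (simp add: ennreal_less_iff)
        then have "(real n powr (1/p)) powr p \<le> r powr p"
          using p by (intro powr_mono2) auto
        then have "real n \<le> r powr p" using p by (simp add: powr_powr)
        then show "\<exists>k\<in>UNIV. of_nat n \<le> a k epowr p"
          using r by (intro bexI[of _ k]) (auto simp: ennreal_of_nat_eq_real_of_nat ennreal_leI)
      qed
      then show ?thesis by (metis top_greatest)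
    qed
  next
    case False
    define L where "L = (SUP k. a k)"
    have aL: "a k \<le> L" for k unfolding L_def by (rule SUP_upper) auto
    then have fin: "a k \<noteq> top" for k using False L_def by (metis neq_top_trans)
    have lim: "a \<longlonglongrightarrow> L" unfolding L_def by (rule LIMSEQ_SUP[OF a])
    have Lfin: "L \<noteq> top" unfolding L_def using False by blast
    have "(\<lambda>k. enn2real (a k)) \<longlonglongrightarrow> enn2real L"
      using lim Lfin by (intro tendsto_enn2real) (auto simp: less_top[symmetric])
    then have "(\<lambda>k. enn2real (a k) powr p) \<longlonglongrightarrow> enn2real L powr p"
      using p by (intro tendsto_powr') auto
    then have "(\<lambda>k. ennreal (enn2real (a k) powr p)) \<longlonglongrightarrow> ennreal (enn2real L powr p)"
      by (rule tendsto_ennrealI)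
    moreover have "(\<lambda>k. ennreal (enn2real (a k) powr p)) = (\<lambda>k. a k epowr p)"
      using fin by (auto simp: epowr_def)
    moreover have "ennreal (enn2real L powr p) = L epowr p"
      using Lfin by (simp add: epowr_def)
    moreover have "incseq (\<lambda>k. a k epowr p)"
      using a p by (auto simp: incseq_def intro: epowr_mono)
    ultimately have "(\<lambda>k. a k epowr p) \<longlonglongrightarrow> (SUP k. a k epowr p)" "(\<lambda>k. a k epowr p) \<longlonglongrightarrow> L epowr p"
      by (auto intro: LIMSEQ_SUP)
    then show ?thesis unfolding L_def by (metis LIMSEQ_unique order_refl)
  qed
qed

lemma affine_preimage_borel:
  fixes Y :: "real set"
  assumes Y: "Y \<in> sets borel" and mu: "0 < mu"
  shows "{z. (z - a) / mu \<in> Y} \<in> sets borel"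
proof -
  have "(\<lambda>z::real. (z - a) / mu) \<in> borel_measurable borel" by measurable
  then have "(\<lambda>z::real. (z - a) / mu) -` Y \<inter> space borel \<in> sets borel"
    using Y by (rule measurable_sets)
  then show ?thesis by (simp add: vimage_def)
qed

lemma emeasure_affine_preimage:
  fixes Y :: "real set"
  assumes Y: "Y \<in> sets borel" and mu: "0 < mu"
  shows "emeasure lborel {z. (z - a) / mu \<in> Y} = ennreal mu * emeasure lborel Y"
proof -
  let ?S = "{z. (z - a) / mu \<in> Y}"
  have S: "?S \<in> sets borel" using affine_preimage_borel[OF Y mu] .
  have "emeasure lborel ?S = (\<integral>\<^sup>+x. indicator ?S x \<partial>lborel)"
    using S by simp
  also have "\<dots> = \<bar>mu\<bar> * (\<integral>\<^sup>+x. indicator ?S (a + mu * x) \<partial>lborel)"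
    using S mu by (intro nn_integral_real_affine) auto
  also have "(\<lambda>x. indicator ?S (a + mu * x) :: ennreal) = indicator Y"
    using mu by (auto simp: indicator_def fun_eq_iff)
  also have "(\<integral>\<^sup>+x. indicator Y x \<partial>lborel) = emeasure lborel Y"
    using Y by simp
  finally show ?thesis using mu by simp
qed

lemma BM2_compact:
  fixes X Y :: "real set"
  assumes X: "compact X" "X \<noteq> {}" and Y: "compact Y" "Y \<noteq> {}" and mu: "0 < mu"
  shows "emeasure lborel X + ennreal mu * emeasure lborel Y
           \<le> emeasure lborel {x + mu * y | x y. x \<in> X \<and> y \<in> Y}"
proof -
  define a where "a = Sup X"
  define b where "b = Inf Y"
  have aX: "a \<in> X" unfolding a_def using X by (intro closed_contains_Sup compact_imp_bounded compact_imp_closed bounded_imp_bdd_above) auto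
  have bY: "b \<in> Y" unfolding b_def using Y by (intro closed_contains_Inf compact_imp_bounded compact_imp_closed bounded_imp_bdd_below) auto
  have xa: "x \<le> a" if "x \<in> X" for x unfolding a_def using X that by (intro cSup_upper compact_imp_bounded bounded_imp_bdd_above) auto
  have yb: "b \<le> y" if "y \<in> Y" for y unfolding b_def using Y that by (intro cInf_lower compact_imp_bounded bounded_imp_bdd_below) auto
  have Xb: "X \<in> sets borel" "Y \<in> sets borel" using X Y by (auto intro: borel_closed compact_imp_closed)
  define P1 where "P1 = {z. (z - a) / mu \<in> Y}"
  define P2 where "P2 = {z. (z - mu * b) / 1 \<in> X}"
  have P1b: "P1 \<in> sets borel" unfolding P1_def using Xb mu by (intro affine_preimage_borel) auto
  have P2b: "P2 \<in> sets borel" unfolding P2_def using Xb mu by (intro affine_preimage_borel) auto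
  have mP1: "emeasure lborel P1 = ennreal mu * emeasure lborel Y"
    unfolding P1_def using Xb mu by (intro emeasure_affine_preimage) auto
  have mP2: "emeasure lborel P2 = emeasure lborel X"
    unfolding P2_def using emeasure_affine_preimage[OF Xb(1), of 1 "mu * b"] by simp
  define Z where "Z = {x + mu * y | x y. x \<in> X \<and> y \<in> Y}"
  have "Z = (\<lambda>p. fst p + mu * snd p) ` (X \<times> Y)" unfolding Z_def by (auto simp: image_iff) (force, blast)
  then have "compact Z"
    using X Y by (auto intro!: compact_continuous_image compact_Times continuous_intros)
  then have Zb: "Z \<in> sets borel" by (auto intro: borel_closed compact_imp_closed)
  have P1Z: "P1 \<subseteq> Z"
  proof
    fix z assume "z \<in> P1"
    then have "(z - a) / mu \<in> Y" by (simp add: P1_def)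
    moreover have "z = a + mu * ((z - a) / mu)" using mu by simp
    ultimately show "z \<in> Z" unfolding Z_def using aX by blast
  qed
  have P2Z: "P2 \<subseteq> Z"
  proof
    fix z assume "z \<in> P2"
    then have "z - mu * b \<in> X" by (simp add: P2_def)
    moreover have "z = (z - mu * b) + mu * b" by simp
    ultimately show "z \<in> Z" unfolding Z_def using bY by blast
  qed
  have int: "P1 \<inter> P2 \<subseteq> {a + mu * b}"
  proof
    fix z assume z: "z \<in> P1 \<inter> P2"
    then have "b \<le> (z - a) / mu" using yb by (auto simp: P1_def)
    then have 1: "a + mu * b \<le> z" using mu by (simp add: field_simps)
    have "z - mu * b \<le> a" using z xa by (auto simp: P2_def)
    with 1 show "z \<in> {a + mu * b}" by simp
  qed
  have "P1 \<inter> P2 \<in> null_sets lborel"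
  proof -
    have "emeasure lborel (P1 \<inter> P2) \<le> emeasure lborel {a + mu * b}"
      using int by (intro emeasure_mono) auto
    then show ?thesis using P1b P2b by (auto simp: null_sets_def)
  qed
  then have "emeasure lborel P2 + emeasure lborel P1 = emeasure lborel (P2 \<union> P1)"
    using P1b P2b by (subst emeasure_Un') (auto simp: Int_commute)
  also have "\<dots> \<le> emeasure lborel Z"
    using P1Z P2Z Zb by (intro emeasure_mono) auto
  finally show ?thesis using mP1 mP2 unfolding Z_def by simp
qed

lemma BMK_compact:
  fixes K :: "nat \<Rightarrow> real set" and l :: "nat \<Rightarrow> real"
  assumes K: "\<forall>i<N. compact (K i) \<and> K i \<noteq> {}" and l: "\<forall>i<N. 0 < l i"
  shows "compact {\<Sum>i<N. l i * a i | a. \<forall>i<N. a i \<in> K i}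
     \<and> {\<Sum>i<N. l i * a i | a. \<forall>i<N. a i \<in> K i} \<noteq> {}
     \<and> (\<Sum>i<N. ennreal (l i) * emeasure lborel (K i))
         \<le> emeasure lborel {\<Sum>i<N. l i * a i | a. \<forall>i<N. a i \<in> K i}"
  using K l
proof (induction N)
  case 0
  have "{\<Sum>i<0. l i * a i | a. \<forall>i<(0::nat). a i \<in> K i} = {0}" by auto
  then show ?case by simp
next
  case (Suc N)
  define S where "S = {\<Sum>i<N. l i * a i | a. \<forall>i<N. a i \<in> K i}"
  have IH: "compact S" "S \<noteq> {}" "(\<Sum>i<N. ennreal (l i) * emeasure lborel (K i)) \<le> emeasure lborel S"
    using Suc by (auto simp: S_def)
  have eq: "{\<Sum>i<Suc N. l i * a i | a. \<forall>i<Suc N. a i \<in> K i} = {x + l N * y | x y. x \<in> S \<and> y \<in> K N}"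
  proof (intro set_eqI iffI)
    fix z assume "z \<in> {\<Sum>i<Suc N. l i * a i | a. \<forall>i<Suc N. a i \<in> K i}"
    then obtain a where "z = (\<Sum>i<Suc N. l i * a i)" "\<forall>i<Suc N. a i \<in> K i" by auto
    then show "z \<in> {x + l N * y | x y. x \<in> S \<and> y \<in> K N}"
      unfolding S_def by fastforce
  next
    fix z assume "z \<in> {x + l N * y | x y. x \<in> S \<and> y \<in> K N}"
    then obtain a y where z: "z = (\<Sum>i<N. l i * a i) + l N * y" "\<forall>i<N. a i \<in> K i" "y \<in> K N"
      unfolding S_def by auto
    define a' where "a' = a(N := y)"
    have "(\<Sum>i<N. l i * a i) = (\<Sum>i<N. l i * a' i)" unfolding a'_def by (intro sum.cong) auto
    then have "z = (\<Sum>i<Suc N. l i * a' i)" using z by (simp add: a'_def)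
    moreover have "\<forall>i<Suc N. a' i \<in> K i" using z by (auto simp: a'_def less_Suc_eq)
    ultimately show "z \<in> {\<Sum>i<Suc N. l i * a i | a. \<forall>i<Suc N. a i \<in> K i}" by blast
  qed
  have KN: "compact (K N)" "K N \<noteq> {}" "0 < l N" using Suc.prems by auto
  have cpt: "compact {x + l N * y | x y. x \<in> S \<and> y \<in> K N}"
  proof -
    have "{x + l N * y | x y. x \<in> S \<and> y \<in> K N} = (\<lambda>p. fst p + l N * snd p) ` (S \<times> K N)" by (auto simp: image_iff) (force, blast)
    then show ?thesis using IH KN by (auto intro!: compact_continuous_image compact_Times continuous_intros)
  qed
  have ne: "{x + l N * y | x y. x \<in> S \<and> y \<in> K N} \<noteq> {}" using IH KN by blast
  have "(\<Sum>i<Suc N. ennreal (l i) * emeasure lborel (K i))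
      = (\<Sum>i<N. ennreal (l i) * emeasure lborel (K i)) + ennreal (l N) * emeasure lborel (K N)" by simp
  also have "\<dots> \<le> emeasure lborel S + ennreal (l N) * emeasure lborel (K N)"
    using IH by (intro add_right_mono) auto
  also have "\<dots> \<le> emeasure lborel {x + l N * y | x y. x \<in> S \<and> y \<in> K N}"
    using IH KN by (intro BM2_compact) auto
  finally show ?case using eq cpt ne by simp
qed

lemma sum_SUP_le:
  fixes g :: "nat \<Rightarrow> 'k \<Rightarrow> ennreal" and S :: "nat \<Rightarrow> 'k set"
  assumes "\<forall>i<N. S i \<noteq> {}"
    and "\<forall>K. (\<forall>i<N. K i \<in> S i) \<longrightarrow> c + (\<Sum>i<N. g i (K i)) \<le> B"
  shows "c + (\<Sum>i<N. SUP k\<in>S i. g i k) \<le> B"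
  using assms
proof (induction N arbitrary: c)
  case 0
  then show ?case by simp
next
  case (Suc N)
  have ne: "S N \<noteq> {}" using Suc.prems by auto
  have "c + (\<Sum>i<Suc N. SUP k\<in>S i. g i k) = (c + (\<Sum>i<N. SUP k\<in>S i. g i k)) + (SUP k\<in>S N. g N k)"
    by (simp add: add.assoc)
  also have "\<dots> = (SUP k\<in>S N. (c + (\<Sum>i<N. SUP k\<in>S i. g i k)) + g N k)"
    using ne by (rule ennreal_SUP_add_right)
  also have "\<dots> \<le> B"
  proof (intro SUP_least)
    fix k assume k: "k \<in> S N"
    have "(c + g N k) + (\<Sum>i<N. SUP k\<in>S i. g i k) \<le> B"
    proof (rule Suc.IH)
      show "\<forall>i<N. S i \<noteq> {}" using Suc.prems by auto
      show "\<forall>K. (\<forall>i<N. K i \<in> S i) \<longrightarrow> c + g N k + (\<Sum>i<N. g i (K i)) \<le> B"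
      proof (intro allI impI)
        fix K assume K: "\<forall>i<N. K i \<in> S i"
        define K' where "K' = K(N := k)"
        have "\<forall>i<Suc N. K' i \<in> S i" using K k by (auto simp: K'_def less_Suc_eq)
        then have "c + (\<Sum>i<Suc N. g i (K' i)) \<le> B" using Suc.prems by blast
        moreover have "(\<Sum>i<Suc N. g i (K' i)) = (\<Sum>i<N. g i (K i)) + g N k"
          by (simp add: K'_def)
        ultimately show "c + g N k + (\<Sum>i<N. g i (K i)) \<le> B"
          by (simp add: ac_simps)
      qed
    qed
    then show "c + (\<Sum>i<N. SUP k\<in>S i. g i k) + g N k \<le> B" by (simp add: ac_simps)
  qed
  finally show ?case .
qed

lemma inner_compact:
  fixes A :: "real set"
  assumes A: "A \<in> sets borel" and r: "r < emeasure lborel A"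
  shows "\<exists>K. compact K \<and> K \<subseteq> A \<and> r < emeasure lborel K"
proof -
  have Al: "A \<in> sets lebesgue" using A by simp
  have "\<exists>T. closed T \<and> T \<subseteq> A \<and> r < emeasure lborel T"
  proof (cases "emeasure lborel A = top")
    case True
    obtain T where T: "closed T" "T \<subseteq> A" "emeasure lebesgue (A - T) < ennreal 1"
      by (rule sets_lebesgue_inner_closed[OF Al, where e=1]) (simp, blast)
    have Tb: "T \<in> sets borel" using T by (auto intro: borel_closed)
    have ATb: "A - T \<in> sets borel" using A Tb by auto
    have "emeasure lborel A \<le> emeasure lborel (T \<union> (A - T))"
      using A Tb ATb by (intro emeasure_mono) auto
    also have "\<dots> \<le> emeasure lborel T + emeasure lborel (A - T)"
      using Tb ATb by (intro emeasure_subadditive) auto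
    finally have sa: "emeasure lborel A \<le> emeasure lborel T + emeasure lborel (A - T)" .
    have "emeasure lborel (A - T) < ennreal 1" using T ATb by simp
    then have ATt: "emeasure lborel (A - T) < top" using ennreal_less_top order.strict_trans by blast
    have "emeasure lborel T = top"
    proof (rule ccontr)
      assume "emeasure lborel T \<noteq> top"
      then have "emeasure lborel T + emeasure lborel (A - T) < top" using ATt by (simp add: top.not_eq_extremum)
      with sa have "emeasure lborel A < top" by (rule le_less_trans)
      then show False using True by simp
    qed
    then show ?thesis using T r True by auto
  next
    case False
    obtain a where a: "emeasure lborel A = ennreal a" "0 \<le> a"
      using False by (cases "emeasure lborel A" rule: epowr_cases) auto
    obtain r' where r': "r = ennreal r'" "0 \<le> r'"
      using r a by (cases r rule: epowr_cases) auto
    have "r' < a" using r r' a by (simp add: ennreal_less_iff)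
    obtain T where T: "closed T" "T \<subseteq> A" "emeasure lebesgue (A - T) < ennreal (a - r')"
      by (rule sets_lebesgue_inner_closed[OF Al, where e="a - r'"]) (use \<open>r' < a\<close> in simp, blast)
    have Tb: "T \<in> sets borel" using T by (auto intro: borel_closed)
    have ATb: "A - T \<in> sets borel" using A Tb by auto
    have "emeasure lborel A \<le> emeasure lborel (T \<union> (A - T))"
      using A Tb ATb by (intro emeasure_mono) auto
    also have "\<dots> \<le> emeasure lborel T + emeasure lborel (A - T)"
      using Tb ATb by (intro emeasure_subadditive) auto
    finally have sa: "emeasure lborel A \<le> emeasure lborel T + emeasure lborel (A - T)" .
    have AT: "emeasure lborel (A - T) < ennreal (a - r')" using T ATb by simp
    have "r < emeasure lborel T"
    proof (rule ccontr)
      assume "\<not> r < emeasure lborel T"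
      then have "emeasure lborel T \<le> ennreal r'" using r' by simp
      then have "emeasure lborel T + emeasure lborel (A - T) \<le> ennreal r' + emeasure lborel (A - T)"
        by (rule add_right_mono)
      also have "\<dots> < ennreal r' + ennreal (a - r')"
        using AT by (simp add: ennreal_add_left_cancel_less)
      also have "\<dots> = ennreal a" using r' \<open>r' < a\<close> by (simp add: ennreal_plus[symmetric] del: ennreal_plus)
      finally show False using sa a by simp
    qed
    then show ?thesis using T by blast
  qed
  then obtain T where T: "closed T" "T \<subseteq> A" "r < emeasure lborel T" by blast
  define Kk where "Kk k = T \<inter> {- real k .. real k}" for k :: nat
  have Kkb: "range Kk \<subseteq> sets borel" using T by (auto simp: Kk_def intro: borel_closed)
  have inc: "incseq Kk" by (auto simp: Kk_def incseq_def)
  have "(\<Union>k. Kk k) = T"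
  proof (intro set_eqI iffI)
    fix x assume "x \<in> T"
    obtain k :: nat where "\<bar>x\<bar> \<le> real k" using real_arch_simple by blast
    then have "x \<in> Kk k" using \<open>x \<in> T\<close> by (auto simp: Kk_def abs_le_iff)
    then show "x \<in> (\<Union>k. Kk k)" by blast
  qed (auto simp: Kk_def)
  then have "(SUP k. emeasure lborel (Kk k)) = emeasure lborel T"
    using SUP_emeasure_incseq[of Kk lborel] Kkb inc by simp
  then have "r < (SUP k. emeasure lborel (Kk k))" using T(3) by simp
  then obtain k where "r < emeasure lborel (Kk k)" by (auto simp: less_SUP_iff)
  moreover have "compact (Kk k)" using T by (auto simp: Kk_def intro: closed_Int_compact)
  moreover have "Kk k \<subseteq> A" using T by (auto simp: Kk_def)
  ultimately show ?thesis by blast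
qed

lemma BM_borel:
  fixes A :: "nat \<Rightarrow> real set" and l :: "nat \<Rightarrow> real"
  assumes A: "\<forall>i<N. A i \<in> sets borel \<and> A i \<noteq> {}" and l: "\<forall>i<N. 0 < l i"
    and C: "C \<in> sets borel"
    and sub: "\<forall>a. (\<forall>i<N. a i \<in> A i) \<longrightarrow> (\<Sum>i<N. l i * a i) \<in> C"
  shows "(\<Sum>i<N. ennreal (l i) * emeasure lborel (A i)) \<le> emeasure lborel C"
proof -
  define KS where "KS i = {K. compact K \<and> K \<subseteq> A i \<and> K \<noteq> {}}" for i
  have meq: "emeasure lborel (A i) = (SUP K\<in>KS i. emeasure lborel K)" if i: "i < N" for i
  proof (rule antisym)
    show "(SUP K\<in>KS i. emeasure lborel K) \<le> emeasure lborel (A i)"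
      using A i by (intro SUP_least emeasure_mono) (auto simp: KS_def)
    show "emeasure lborel (A i) \<le> (SUP K\<in>KS i. emeasure lborel K)"
    proof (unfold le_SUP_iff, intro allI impI)
      fix y assume "y < emeasure lborel (A i)"
      then obtain K where K: "compact K" "K \<subseteq> A i" "y < emeasure lborel K"
        using inner_compact A i by blast
      obtain a0 where a0: "a0 \<in> A i" using A i by auto
      have "compact (K \<union> {a0})" using K by auto
      moreover have "emeasure lborel K \<le> emeasure lborel (K \<union> {a0})"
      proof -
        have "K \<union> {a0} \<in> sets borel" using K by (intro borel_closed closed_Un compact_imp_closed) auto
        then show ?thesis by (intro emeasure_mono) auto
      qed
      ultimately show "\<exists>K\<in>KS i. y < emeasure lborel K"
        using K a0 unfolding KS_def by (intro bexI[of _ "K \<union> {a0}"]) auto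
    qed
  qed
  have "(\<Sum>i<N. ennreal (l i) * emeasure lborel (A i)) = 0 + (\<Sum>i<N. SUP K\<in>KS i. ennreal (l i) * emeasure lborel K)"
    using meq by (simp add: SUP_mult_left_ennreal)
  also have "\<dots> \<le> emeasure lborel C"
  proof (rule sum_SUP_le)
    show "\<forall>i<N. KS i \<noteq> {}"
    proof (intro allI impI)
      fix i assume "i < N"
      then obtain a0 where "a0 \<in> A i" using A by auto
      then have "{a0} \<in> KS i" unfolding KS_def by auto
      then show "KS i \<noteq> {}" by blast
    qed
    show "\<forall>K. (\<forall>i<N. K i \<in> KS i) \<longrightarrow> 0 + (\<Sum>i<N. ennreal (l i) * emeasure lborel (K i)) \<le> emeasure lborel C"
    proof (intro allI impI)
      fix K assume K: "\<forall>i<N. K i \<in> KS i"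
      define S where "S = {\<Sum>i<N. l i * a i | a. \<forall>i<N. a i \<in> K i}"
      have h: "compact S" "(\<Sum>i<N. ennreal (l i) * emeasure lborel (K i)) \<le> emeasure lborel S"
        using BMK_compact[of N K l] K l unfolding S_def KS_def by auto
      have "S \<subseteq> C" unfolding S_def using sub K unfolding KS_def by blast
      then have "emeasure lborel S \<le> emeasure lborel C"
        using h C by (intro emeasure_mono) auto
      then show "0 + (\<Sum>i<N. ennreal (l i) * emeasure lborel (K i)) \<le> emeasure lborel C"
        using h by simp
    qed
  qed
  finally show ?thesis .
qed

lemma emeasure_lborel_Ioi_top: "emeasure lborel {(0::real)<..} = top"
proof -
  have "(SUP n. of_nat n :: ennreal) \<le> emeasure lborel {(0::real)<..}"
  proof (intro SUP_least)
    fix n :: nat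
    have "of_nat n = emeasure lborel {(0::real)<..<real n}" by (simp add: ennreal_of_nat_eq_real_of_nat)
    also have "\<dots> \<le> emeasure lborel {(0::real)<..}" by (intro emeasure_mono) auto
    finally show "of_nat n \<le> emeasure lborel {(0::real)<..}" .
  qed
  then show ?thesis by (simp add: ennreal_SUP_of_nat_eq_top top_unique)
qed

lemma layer_cake:
  fixes G :: "real \<Rightarrow> ennreal"
  assumes G[measurable]: "G \<in> borel_measurable borel"
  shows "(\<integral>\<^sup>+s. G s \<partial>lborel) = (\<integral>\<^sup>+t. indicator {0<..} t * emeasure lborel {s. ennreal t < G s} \<partial>lborel)"
proof -
  define f where "f t s = (if 0 < t \<and> ennreal t < G s then 1 else 0 :: ennreal)" for t s
  have fm: "case_prod f \<in> borel_measurable (lborel \<Otimes>\<^sub>M lborel)"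
    unfolding f_def by measurable
  have inner: "G s = (\<integral>\<^sup>+t. f t s \<partial>lborel)" for s
  proof -
    have "(\<integral>\<^sup>+t. f t s \<partial>lborel) = (\<integral>\<^sup>+t. indicator {t. 0 < t \<and> ennreal t < G s} t \<partial>lborel)"
      unfolding f_def by (intro nn_integral_cong) (auto simp: indicator_def)
    also have "\<dots> = emeasure lborel {t. 0 < t \<and> ennreal t < G s}"
      by (intro nn_integral_indicator) measurable
    also have "\<dots> = G s"
    proof (cases "G s" rule: epowr_cases)
      case top
      then have "{t. 0 < t \<and> ennreal t < G s} = {0<..}" by auto
      then show ?thesis using top emeasure_lborel_Ioi_top by simp
    next
      case (fin g)
      then have "{t. 0 < t \<and> ennreal t < G s} = {0<..<g}" by (auto simp: ennreal_less_iff)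
      then show ?thesis using fin by simp
    qed
    finally show ?thesis by simp
  qed
  have "(\<integral>\<^sup>+s. G s \<partial>lborel) = (\<integral>\<^sup>+s. (\<integral>\<^sup>+t. f t s \<partial>lborel) \<partial>lborel)"
    using inner by simp
  also have "\<dots> = (\<integral>\<^sup>+t. (\<integral>\<^sup>+s. f t s \<partial>lborel) \<partial>lborel)"
    by (rule lborel_pair.Fubini'[OF fm])
  also have "\<dots> = (\<integral>\<^sup>+t. indicator {0<..} t * emeasure lborel {s. ennreal t < G s} \<partial>lborel)"
  proof (intro nn_integral_cong)
    fix t :: real
    have "(\<integral>\<^sup>+s. f t s \<partial>lborel) = (\<integral>\<^sup>+s. indicator {0<..} t * indicator {s. ennreal t < G s} s \<partial>lborel)"
      unfolding f_def by (intro nn_integral_cong) (auto simp: indicator_def)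
    also have "\<dots> = indicator {0<..} t * emeasure lborel {s. ennreal t < G s}"
      by (intro nn_integral_cmult_indicator) measurable
    finally show "(\<integral>\<^sup>+s. f t s \<partial>lborel) = indicator {0<..} t * emeasure lborel {s. ennreal t < G s}" .
  qed
  finally show ?thesis .
qed

lemma level_measurable:
  fixes G :: "real \<Rightarrow> ennreal"
  assumes G[measurable]: "G \<in> borel_measurable borel"
  shows "(\<lambda>t. emeasure lborel {s. ennreal t < G s}) \<in> borel_measurable borel"
proof -
  have "{p \<in> space (borel \<Otimes>\<^sub>M borel). ennreal (fst p) < G (snd p)} \<in> sets (borel \<Otimes>\<^sub>M borel)"
    by measurable
  then have Q: "{p :: real \<times> real. ennreal (fst p) < G (snd p)} \<in> sets (borel \<Otimes>\<^sub>M lborel)"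
    by (simp add: space_pair_measure)
  have "(\<lambda>t. emeasure lborel (Pair t -` {p :: real \<times> real. ennreal (fst p) < G (snd p)})) \<in> borel_measurable borel"
    by (rule lborel.measurable_emeasure_Pair[OF Q])
  then show ?thesis by (simp add: vimage_def)
qed

lemma prod_epowr_strict:
  fixes x :: "nat \<Rightarrow> ennreal" and l :: "nat \<Rightarrow> real"
  assumes N: "1 \<le> N" and l: "\<forall>i<N. 0 < l i" and l1: "(\<Sum>i<N. l i) = 1"
    and t: "0 < t" and x: "\<forall>i<N. ennreal t < x i"
  shows "ennreal t < (\<Prod>i<N. x i epowr l i)"
proof -
  define y where "y i = enn2real (min (x i) (ennreal (t + 1)))" for i
  have y: "t < y i" "min (x i) (ennreal (t + 1)) = ennreal (y i)" if "i < N" for i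
  proof -
    have "min (x i) (ennreal (t + 1)) \<le> ennreal (t + 1)" by simp
    also have "\<dots> < top" by simp
    finally have "min (x i) (ennreal (t + 1)) \<noteq> top" by simp
    then show "min (x i) (ennreal (t + 1)) = ennreal (y i)" unfolding y_def by (simp add: less_top)
    moreover have "ennreal t < min (x i) (ennreal (t + 1))" using x that t by (simp add: ennreal_less_iff)
    ultimately show "t < y i" using t by (simp add: ennreal_less_iff)
  qed
  have "(\<Prod>i<N. t powr l i) < (\<Prod>i<N. y i powr l i)"
  proof (rule prod_mono_strict[of 0])
    have *: "t powr l i < y i powr l i" if "i < N" for i
      using l t y that by (auto intro!: powr_less_mono2)
    show "t powr l 0 < y 0 powr l 0" using * N by auto
    show "0 \<le> t powr l i \<and> t powr l i \<le> y i powr l i" if "i \<in> {..<N}" for i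
      using *[of i] that by auto
    show "0 < y i powr l i" if "i \<in> {..<N}" for i
      using y(1)[of i] t that by auto
  qed (use N in auto)
  moreover have "(\<Prod>i<N. t powr l i) = t" using t l1 by (simp add: powr_sum[symmetric])
  ultimately have "ennreal t < ennreal (\<Prod>i<N. y i powr l i)" using t by (simp add: ennreal_less_iff)
  also have "\<dots> = (\<Prod>i<N. ennreal (y i) epowr l i)"
  proof -
    have "ennreal (\<Prod>i<N. y i powr l i) = (\<Prod>i<N. ennreal (y i powr l i))"
      by (simp add: prod_ennreal)
    also have "\<dots> = (\<Prod>i<N. ennreal (y i) epowr l i)"
      using y t by (intro prod.cong refl) (auto intro!: epowr_ennreal[symmetric] less_imp_le[OF less_trans[OF t]])
    finally show ?thesis .
  qed
  also have "\<dots> = (\<Prod>i<N. min (x i) (ennreal (t + 1)) epowr l i)"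
    using y by simp
  also have "\<dots> \<le> (\<Prod>i<N. x i epowr l i)"
    using l by (intro prod_epowr_mono) auto
  finally show ?thesis .
qed

lemma PL1_core:
  fixes G :: "nat \<Rightarrow> real \<Rightarrow> ennreal" and H :: "real \<Rightarrow> ennreal" and l :: "nat \<Rightarrow> real"
  assumes N: "1 \<le> N" and l: "\<forall>i<N. 0 < l i" and l1: "(\<Sum>i<N. l i) = 1"
    and Gm: "\<forall>i<N. G i \<in> borel_measurable borel" and Hm[measurable]: "H \<in> borel_measurable borel"
    and hyp: "\<forall>s. (\<Prod>i<N. G i (s i) epowr l i) \<le> H (\<Sum>i<N. l i * s i)"
    and sup: "\<forall>i<N. 1 \<le> (SUP s. G i s)"
  shows "(\<Sum>i<N. ennreal (l i) * (\<integral>\<^sup>+s. min (G i s) 1 \<partial>lborel)) \<le> (\<integral>\<^sup>+s. H s \<partial>lborel)"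
proof -
  define A where "A i t = {s. ennreal t < G i s}" for i t
  define C where "C t = {s. ennreal t < H s}" for t
  have Ab: "A i t \<in> sets borel" if "i < N" for i t
  proof -
    have [measurable]: "G i \<in> borel_measurable borel" using Gm that by auto
    show ?thesis unfolding A_def by measurable
  qed
  have Cb: "C t \<in> sets borel" for t unfolding C_def by measurable
  have BMt: "(\<Sum>i<N. ennreal (l i) * emeasure lborel (A i t)) \<le> emeasure lborel (C t)"
    if t: "0 < t" "t < 1" for t
  proof (rule BM_borel)
    show "\<forall>i<N. A i t \<in> sets borel \<and> A i t \<noteq> {}"
    proof (intro allI impI conjI)
      fix i assume i: "i < N"
      show "A i t \<in> sets borel" using Ab i .
      have "ennreal t < 1" using t by (simp add: ennreal_less_iff)
      also have "1 \<le> (SUP s. G i s)" using sup i by auto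
      finally obtain s where "ennreal t < G i s" by (auto simp: less_SUP_iff)
      then show "A i t \<noteq> {}" unfolding A_def by auto
    qed
    show "\<forall>a. (\<forall>i<N. a i \<in> A i t) \<longrightarrow> (\<Sum>i<N. l i * a i) \<in> C t"
    proof (intro allI impI)
      fix a assume a: "\<forall>i<N. a i \<in> A i t"
      have "ennreal t < (\<Prod>i<N. G i (a i) epowr l i)"
        using a t N l l1 by (intro prod_epowr_strict) (auto simp: A_def)
      also have "\<dots> \<le> H (\<Sum>i<N. l i * a i)" using hyp by auto
      finally show "(\<Sum>i<N. l i * a i) \<in> C t" unfolding C_def by simp
    qed
  qed (use l Cb in auto)
  have Am: "(\<lambda>t. emeasure lborel (A i t)) \<in> borel_measurable borel" if "i < N" for i
    unfolding A_def using Gm that by (intro level_measurable) auto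
  have eqG: "(\<integral>\<^sup>+s. min (G i s) 1 \<partial>lborel) = (\<integral>\<^sup>+t. indicator {0<..<1} t * emeasure lborel (A i t) \<partial>lborel)"
    if i: "i < N" for i
  proof -
    have [measurable]: "G i \<in> borel_measurable borel" using Gm i by auto
    have "(\<integral>\<^sup>+s. min (G i s) 1 \<partial>lborel)
        = (\<integral>\<^sup>+t. indicator {0<..} t * emeasure lborel {s. ennreal t < min (G i s) 1} \<partial>lborel)"
      by (rule layer_cake) measurable
    also have "\<dots> = (\<integral>\<^sup>+t. indicator {0<..<1} t * emeasure lborel (A i t) \<partial>lborel)"
    proof (intro nn_integral_cong)
      fix t :: real
      show "indicator {0<..} t * emeasure lborel {s. ennreal t < min (G i s) 1}
          = indicator {0<..<1} t * emeasure lborel (A i t)"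
      proof (cases "t < 1")
        case True
        then have "{s. ennreal t < min (G i s) 1} = A i t"
          by (auto simp: A_def ennreal_less_iff)
        then show ?thesis using True by (simp add: indicator_def)
      next
        case False
        then have "{s. ennreal t < min (G i s) 1} = {}"
          by (auto simp: not_less ennreal_less_iff min_less_iff_conj)
        then show ?thesis using False by (simp add: indicator_def)
      qed
    qed
    finally show ?thesis .
  qed
  have "(\<Sum>i<N. ennreal (l i) * (\<integral>\<^sup>+s. min (G i s) 1 \<partial>lborel))
      = (\<Sum>i<N. ennreal (l i) * (\<integral>\<^sup>+t. indicator {0<..<1} t * emeasure lborel (A i t) \<partial>lborel))"
    using eqG by simp
  also have "\<dots> = (\<Sum>i<N. (\<integral>\<^sup>+t. ennreal (l i) * (indicator {0<..<1} t * emeasure lborel (A i t)) \<partial>lborel))"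
  proof (intro sum.cong refl)
    fix i assume "i \<in> {..<N}"
    then have [measurable]: "(\<lambda>t. emeasure lborel (A i t)) \<in> borel_measurable borel" using Am by auto
    show "ennreal (l i) * (\<integral>\<^sup>+t. indicator {0<..<1} t * emeasure lborel (A i t) \<partial>lborel)
        = (\<integral>\<^sup>+t. ennreal (l i) * (indicator {0<..<1} t * emeasure lborel (A i t)) \<partial>lborel)"
      by (rule nn_integral_cmult[symmetric]) measurable
  qed
  also have "\<dots> = (\<integral>\<^sup>+t. (\<Sum>i<N. ennreal (l i) * (indicator {0<..<1} t * emeasure lborel (A i t))) \<partial>lborel)"
  proof (rule nn_integral_sum[symmetric])
    fix i assume "i \<in> {..<N}"
    then have [measurable]: "(\<lambda>t. emeasure lborel (A i t)) \<in> borel_measurable borel" using Am by auto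
    show "(\<lambda>t. ennreal (l i) * (indicator {0<..<1} t * emeasure lborel (A i t))) \<in> borel_measurable lborel"
      by measurable
  qed
  also have "\<dots> \<le> (\<integral>\<^sup>+t. indicator {0<..} t * emeasure lborel (C t) \<partial>lborel)"
  proof (intro nn_integral_mono)
    fix t :: real
    show "(\<Sum>i<N. ennreal (l i) * (indicator {0<..<1} t * emeasure lborel (A i t)))
        \<le> indicator {0<..} t * emeasure lborel (C t)"
    proof (cases "0 < t \<and> t < 1")
      case True
      then have "(\<Sum>i<N. ennreal (l i) * (indicator {0<..<1} t * emeasure lborel (A i t)))
          = (\<Sum>i<N. ennreal (l i) * emeasure lborel (A i t))" by (simp add: indicator_def)
      also have "\<dots> \<le> emeasure lborel (C t)" using BMt True by auto
      finally show ?thesis using True by (simp add: indicator_def)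
    next
      case False
      then show ?thesis by (simp add: indicator_def)
    qed
  qed
  also have "\<dots> = (\<integral>\<^sup>+s. H s \<partial>lborel)"
    unfolding C_def by (rule layer_cake[symmetric]) measurable
  finally show ?thesis .
qed

lemma prod_epowr_scale:
  fixes a :: "nat \<Rightarrow> ennreal" and g l :: "nat \<Rightarrow> real"
  assumes g: "\<forall>i<N. 0 < g i" and l: "\<forall>i<N. 0 < l i"
  shows "(\<Prod>i<N. (a i * ennreal (1 / g i)) epowr l i)
       = (\<Prod>i<N. a i epowr l i) * ennreal (1 / (\<Prod>i<N. g i powr l i))"
proof -
  have "(\<Prod>i<N. (a i * ennreal (1 / g i)) epowr l i) = (\<Prod>i<N. a i epowr l i * ennreal ((1 / g i) powr l i))"
    using g l by (intro prod.cong refl) (auto simp: epowr_mult)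
  also have "\<dots> = (\<Prod>i<N. a i epowr l i) * (\<Prod>i<N. ennreal ((1 / g i) powr l i))"
    by (simp add: prod.distrib)
  also have "(\<Prod>i<N. ennreal ((1 / g i) powr l i)) = ennreal (\<Prod>i<N. (1 / g i) powr l i)"
    by (simp add: prod_ennreal)
  also have "(\<Prod>i<N. (1 / g i) powr l i) = (\<Prod>i<N. 1 / g i powr l i)"
    using g by (intro prod.cong refl) (auto simp: powr_divide)
  also have "\<dots> = 1 / (\<Prod>i<N. g i powr l i)"
    by (simp add: prod_dividef)
  finally show ?thesis .
qed

lemma min_mult_ennreal:
  fixes a b :: ennreal
  shows "min (a * ennreal c) (b * ennreal c) = min a b * ennreal c"
proof (cases "a \<le> b")
  case True
  then have "a * ennreal c \<le> b * ennreal c" by (rule mult_right_mono) simp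
  then show ?thesis using True by (simp add: min_def)
next
  case False
  then have "b * ennreal c \<le> a * ennreal c" by (intro mult_right_mono) auto
  then show ?thesis using False by (auto simp: min_def intro: antisym)
qed

lemma PL1_trunc:
  fixes G :: "nat \<Rightarrow> real \<Rightarrow> ennreal" and H :: "real \<Rightarrow> ennreal" and l :: "nat \<Rightarrow> real"
  assumes N: "1 \<le> N" and l: "\<forall>i<N. 0 < l i" and l1: "(\<Sum>i<N. l i) = 1"
    and Gm: "\<forall>i<N. G i \<in> borel_measurable borel" and Hm[measurable]: "H \<in> borel_measurable borel"
    and hyp: "\<forall>s. (\<Prod>i<N. G i (s i) epowr l i) \<le> H (\<Sum>i<N. l i * s i)"
    and gam: "\<forall>i<N. 0 < gam i \<and> ennreal (gam i) \<le> (SUP s. G i s)"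
  shows "(\<Prod>i<N. (\<integral>\<^sup>+s. min (G i s) (ennreal (gam i)) \<partial>lborel) epowr l i) \<le> (\<integral>\<^sup>+s. H s \<partial>lborel)"
proof -
  define g where "g = (\<Prod>i<N. gam i powr l i)"
  have gpos: "0 < g" unfolding g_def using gam by (intro prod_pos) auto
  define G' where "G' i s = G i s * ennreal (1 / gam i)" for i s
  define H' where "H' s = H s * ennreal (1 / g)" for s
  have G'm: "\<forall>i<N. G' i \<in> borel_measurable borel"
  proof (intro allI impI)
    fix i assume "i < N"
    then have [measurable]: "G i \<in> borel_measurable borel" using Gm by auto
    show "G' i \<in> borel_measurable borel" unfolding G'_def by measurable
  qed
  have H'm: "H' \<in> borel_measurable borel" unfolding H'_def by measurable
  have hyp': "\<forall>s. (\<Prod>i<N. G' i (s i) epowr l i) \<le> H' (\<Sum>i<N. l i * s i)"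
  proof
    fix s
    have "(\<Prod>i<N. G' i (s i) epowr l i) = (\<Prod>i<N. G i (s i) epowr l i) * ennreal (1 / g)"
      unfolding G'_def g_def using gam l by (intro prod_epowr_scale) auto
    also have "\<dots> \<le> H (\<Sum>i<N. l i * s i) * ennreal (1 / g)"
      using hyp by (intro mult_right_mono) auto
    finally show "(\<Prod>i<N. G' i (s i) epowr l i) \<le> H' (\<Sum>i<N. l i * s i)" by (simp add: H'_def)
  qed
  have sup': "\<forall>i<N. 1 \<le> (SUP s. G' i s)"
  proof (intro allI impI)
    fix i assume i: "i < N"
    have "1 = ennreal (gam i) * ennreal (1 / gam i)"
      using gam i by (subst ennreal_mult[symmetric]) auto
    also have "\<dots> \<le> (SUP s. G i s) * ennreal (1 / gam i)"
      using gam i by (intro mult_right_mono) auto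
    also have "\<dots> = (SUP s. G' i s)" unfolding G'_def by (simp add: SUP_mult_right_ennreal)
    finally show "1 \<le> (SUP s. G' i s)" .
  qed
  have core: "(\<Sum>i<N. ennreal (l i) * (\<integral>\<^sup>+s. min (G' i s) 1 \<partial>lborel)) \<le> (\<integral>\<^sup>+s. H' s \<partial>lborel)"
    by (rule PL1_core[OF N l l1 G'm H'm hyp' sup'])
  define x where "x i = (\<integral>\<^sup>+s. min (G i s) (ennreal (gam i)) \<partial>lborel)" for i
  have minG': "(\<integral>\<^sup>+s. min (G' i s) 1 \<partial>lborel) = x i * ennreal (1 / gam i)" if i: "i < N" for i
  proof -
    have [measurable]: "G i \<in> borel_measurable borel" using Gm i by auto
    have "(\<lambda>s. min (G' i s) 1) = (\<lambda>s. min (G i s) (ennreal (gam i)) * ennreal (1 / gam i))"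
    proof
      fix s
      have "(1::ennreal) = ennreal (gam i) * ennreal (1 / gam i)"
        using gam i by (subst ennreal_mult[symmetric]) auto
      then have "min (G' i s) 1 = min (G i s * ennreal (1 / gam i)) (ennreal (gam i) * ennreal (1 / gam i))"
        unfolding G'_def by simp
      then show "min (G' i s) 1 = min (G i s) (ennreal (gam i)) * ennreal (1 / gam i)"
        by (simp only: min_mult_ennreal)
    qed
    then show ?thesis unfolding x_def by (simp add: nn_integral_multc)
  qed
  have "(\<Prod>i<N. x i epowr l i) * ennreal (1 / g) = (\<Prod>i<N. (x i * ennreal (1 / gam i)) epowr l i)"
    unfolding g_def using gam l by (intro prod_epowr_scale[symmetric]) auto
  also have "\<dots> \<le> (\<Sum>i<N. ennreal (l i) * (x i * ennreal (1 / gam i)))"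
    using N l l1 by (intro amgm_ennreal) auto
  also have "\<dots> = (\<Sum>i<N. ennreal (l i) * (\<integral>\<^sup>+s. min (G' i s) 1 \<partial>lborel))"
    using minG' by simp
  also have "\<dots> \<le> (\<integral>\<^sup>+s. H' s \<partial>lborel)" by (rule core)
  also have "\<dots> = (\<integral>\<^sup>+s. H s \<partial>lborel) * ennreal (1 / g)"
    unfolding H'_def by (simp add: nn_integral_multc)
  finally have le: "(\<Prod>i<N. x i epowr l i) * ennreal (1 / g) \<le> (\<integral>\<^sup>+s. H s \<partial>lborel) * ennreal (1 / g)" .
  have one: "ennreal (1 / g) * ennreal g = 1" using gpos by (simp add: ennreal_mult[symmetric])
  have "(\<Prod>i<N. x i epowr l i) = (\<Prod>i<N. x i epowr l i) * ennreal (1 / g) * ennreal g"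
    using one by (simp add: mult.assoc)
  also have "\<dots> \<le> (\<integral>\<^sup>+s. H s \<partial>lborel) * ennreal (1 / g) * ennreal g"
    by (rule mult_right_mono[OF le]) simp
  also have "\<dots> = (\<integral>\<^sup>+s. H s \<partial>lborel)" using one by (simp add: mult.assoc)
  finally show ?thesis unfolding x_def .
qed

lemma PL1:
  fixes G :: "nat \<Rightarrow> real \<Rightarrow> ennreal" and H :: "real \<Rightarrow> ennreal" and l :: "nat \<Rightarrow> real"
  assumes N: "1 \<le> N" and l: "\<forall>i<N. 0 < l i" and l1: "(\<Sum>i<N. l i) = 1"
    and Gm: "\<forall>i<N. G i \<in> borel_measurable borel" and Hm[measurable]: "H \<in> borel_measurable borel"
    and hyp: "\<forall>s. (\<Prod>i<N. G i (s i) epowr l i) \<le> H (\<Sum>i<N. l i * s i)"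
  shows "(\<Prod>i<N. (\<integral>\<^sup>+s. G i s \<partial>lborel) epowr l i) \<le> (\<integral>\<^sup>+s. H s \<partial>lborel)"
proof (cases "\<exists>i<N. (\<integral>\<^sup>+s. G i s \<partial>lborel) = 0")
  case True
  then obtain j where j: "j < N" "(\<integral>\<^sup>+s. G j s \<partial>lborel) = 0" by auto
  have "(\<Prod>i<N. (\<integral>\<^sup>+s. G i s \<partial>lborel) epowr l i) = 0"
    using j by (intro prod_zero bexI[of _ j]) auto
  then show ?thesis by (metis zero_le)
next
  case False
  define S where "S i = (SUP s. G i s)" for i
  have GS: "G i s \<le> S i" for i s unfolding S_def by (rule SUP_upper) auto
  have Spos: "0 < S i" if i: "i < N" for i
  proof (rule ccontr)
    assume "\<not> 0 < S i"
    then have "S i = 0" by (simp add: not_less)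
    then have "\<And>s. G i s = 0" using GS by (metis le_zero_eq)
    then have "(\<integral>\<^sup>+s. G i s \<partial>lborel) = 0" by simp
    then show False using False i by auto
  qed
  define c where "c i k = min (of_nat (Suc k)) (S i)" for i k
  define gam where "gam i k = enn2real (c i k)" for i k
  have cfin: "c i k \<noteq> top" for i k
  proof -
    have "c i k \<le> of_nat (Suc k)" unfolding c_def by simp
    also have "\<dots> < top" by (simp add: of_nat_less_top)
    finally show ?thesis by simp
  qed
  have cg: "ennreal (gam i k) = c i k" for i k
    unfolding gam_def using cfin by (simp add: less_top)
  have cpos: "0 < c i k" if "i < N" for i k
    unfolding c_def using Spos[OF that] by (simp add: add_pos_nonneg)
  have gpos: "0 < gam i k" if "i < N" for i k
    using cpos[OF that, of k] cg[of i k] by (metis ennreal_less_zero_iff)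
  have trunc: "(\<Prod>i<N. (\<integral>\<^sup>+s. min (G i s) (c i k) \<partial>lborel) epowr l i) \<le> (\<integral>\<^sup>+s. H s \<partial>lborel)" for k
  proof -
    have "(\<Prod>i<N. (\<integral>\<^sup>+s. min (G i s) (ennreal (gam i k)) \<partial>lborel) epowr l i) \<le> (\<integral>\<^sup>+s. H s \<partial>lborel)"
    proof (rule PL1_trunc[OF N l l1 Gm Hm hyp])
      show "\<forall>i<N. 0 < gam i k \<and> ennreal (gam i k) \<le> (SUP s. G i s)"
        using gpos cg by (auto simp: c_def S_def[symmetric])
    qed
    then show ?thesis by (simp add: cg)
  qed
  define a where "a i k = (\<integral>\<^sup>+s. min (G i s) (c i k) \<partial>lborel)" for i k
  have cinc: "incseq (c i)" for i
    unfolding c_def incseq_def by (intro allI impI min.mono) auto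
  have ainc: "incseq (a i)" for i
  proof (intro monoI)
    fix m n :: nat assume "m \<le> n"
    then have "c i m \<le> c i n" using cinc[of i] by (simp add: incseq_def)
    then show "a i m \<le> a i n" unfolding a_def by (intro nn_integral_mono min.mono order_refl)
  qed
  have aSUP: "(SUP k. a i k) = (\<integral>\<^sup>+s. G i s \<partial>lborel)" if i: "i < N" for i
  proof -
    have [measurable]: "G i \<in> borel_measurable borel" using Gm i by auto
    have pt: "(SUP k. min (G i s) (c i k)) = G i s" for s
    proof (rule antisym)
      show "(SUP k. min (G i s) (c i k)) \<le> G i s" by (intro SUP_least) auto
      show "G i s \<le> (SUP k. min (G i s) (c i k))"
      proof (unfold le_SUP_iff, intro allI impI)
        fix y assume y: "y < G i s"
        then have "y \<noteq> top" by (auto simp: top_unique)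
        then obtain r where r: "y = ennreal r" "0 \<le> r" by (cases y rule: epowr_cases) auto
        obtain k :: nat where "r < real k" using reals_Archimedean2 by blast
        then have "r < real (Suc k)" by simp
        then have "ennreal r < ennreal (real (Suc k))" by (intro ennreal_lessI) auto
        then have "y < of_nat (Suc k)" using r by (simp only: ennreal_of_nat_eq_real_of_nat)
        moreover have "y < S i" using y GS[of i s] by (rule less_le_trans)
        ultimately have "y < min (G i s) (c i k)" using y by (simp add: c_def)
        then show "\<exists>k\<in>UNIV. y < min (G i s) (c i k)" by blast
      qed
    qed
    have "(SUP k. a i k) = (\<integral>\<^sup>+s. (SUP k. min (G i s) (c i k)) \<partial>lborel)"
      unfolding a_def
    proof (rule nn_integral_monotone_convergence_SUP[symmetric])
      show "incseq (\<lambda>k s. min (G i s) (c i k))"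
      proof (intro monoI le_funI)
        fix m n :: nat and s assume "m \<le> n"
        then have "c i m \<le> c i n" using cinc[of i] by (simp add: incseq_def)
        then show "min (G i s) (c i m) \<le> min (G i s) (c i n)" by (intro min.mono order_refl)
      qed
      show "\<And>k. (\<lambda>s. min (G i s) (c i k)) \<in> borel_measurable lborel" by measurable
    qed
    also have "\<dots> = (\<integral>\<^sup>+s. G i s \<partial>lborel)" using pt by simp
    finally show ?thesis .
  qed
  have "(\<Prod>i<N. (\<integral>\<^sup>+s. G i s \<partial>lborel) epowr l i) = (\<Prod>i<N. (SUP k. a i k) epowr l i)"
    using aSUP by simp
  also have "\<dots> = (\<Prod>i<N. SUP k. a i k epowr l i)"
    using l ainc by (intro prod.cong refl SUP_epowr_incseq) auto
  also have "\<dots> = (SUP k. \<Prod>i<N. a i k epowr l i)"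
  proof (rule SUP_prod_incseq[symmetric])
    show "\<forall>i\<in>{..<N}. incseq (\<lambda>k. a i k epowr l i)"
      using ainc l by (auto simp: incseq_def intro!: epowr_mono)
  qed simp
  also have "\<dots> \<le> (\<integral>\<^sup>+s. H s \<partial>lborel)"
    using trunc unfolding a_def by (intro SUP_least) auto
  finally show ?thesis .
qed

lemma SUP_indicator_incseq:
  fixes c :: ennreal
  assumes "incseq A"
  shows "(SUP k. c * indicator (A k) x) = c * indicator (\<Union>k. A k) x"
proof (cases "x \<in> (\<Union>k. A k)")
  case True
  then obtain k0 where k0: "x \<in> A k0" by auto
  show ?thesis
  proof (rule antisym)
    show "(SUP k. c * indicator (A k) x) \<le> c * indicator (\<Union>k. A k) x"
      using True by (intro SUP_least) (auto simp: indicator_def)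
    have "c * indicator (\<Union>k. A k) x = c * indicator (A k0) x" using True k0 by (simp add: indicator_def)
    also have "\<dots> \<le> (SUP k. c * indicator (A k) x)" by (rule SUP_upper) auto
    finally show "c * indicator (\<Union>k. A k) x \<le> (SUP k. c * indicator (A k) x)" .
  qed
next
  case False
  then show ?thesis by (simp add: indicator_def)
qed

lemma nn_integral_exp_subst:
  fixes g :: "real \<Rightarrow> ennreal"
  assumes g[measurable]: "g \<in> borel_measurable borel"
  shows "(\<integral>\<^sup>+y. g y * indicator {0<..} y \<partial>lborel) = (\<integral>\<^sup>+s. g (exp s) * ennreal (exp s) \<partial>lborel)"
proof -
  define A where "A k = {exp (- real (Suc k)) .. exp (real (Suc k))}" for k
  define B where "B k = {- real (Suc k) .. real (Suc k)}" for k
  have step: "(\<integral>\<^sup>+y. g y * indicator (A k) y \<partial>lborel) = (\<integral>\<^sup>+s. g (exp s) * ennreal (exp s) * indicator (B k) s \<partial>lborel)" for k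
    unfolding A_def B_def
    by (rule nn_integral_substitution_aux[where g=exp and g'=exp and a="- real (Suc k)" and b="real (Suc k)"])
       (auto intro!: derivative_eq_intros continuous_intros)
  have Ainc: "incseq A" unfolding A_def incseq_def by auto
  have Binc: "incseq B" unfolding B_def incseq_def by auto
  have AU: "(\<Union>k. A k) = {0<..}"
  proof (intro set_eqI iffI)
    fix y :: real assume "y \<in> {0<..}"
    then have y: "0 < y" by simp
    obtain k :: nat where k: "\<bar>ln y\<bar> < real k" using reals_Archimedean2 by blast
    then have "- real (Suc k) \<le> ln y" "ln y \<le> real (Suc k)" by auto
    then have "exp (- real (Suc k)) \<le> y" "y \<le> exp (real (Suc k))"
      using y by (metis exp_le_cancel_iff exp_ln)+
    then show "y \<in> (\<Union>k. A k)" unfolding A_def by auto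
  qed (auto simp: A_def, metis exp_gt_zero less_le_trans)
  have BU: "(\<Union>k. B k) = UNIV"
  proof (intro set_eqI iffI)
    fix s :: real
    obtain k :: nat where k: "\<bar>s\<bar> < real k" using reals_Archimedean2 by blast
    then have "s \<in> B k" unfolding B_def by (auto simp: abs_less_iff)
    then show "s \<in> (\<Union>k. B k)" by blast
  qed auto
  have "(\<integral>\<^sup>+y. g y * indicator {0<..} y \<partial>lborel) = (\<integral>\<^sup>+y. (SUP k. g y * indicator (A k) y) \<partial>lborel)"
    using SUP_indicator_incseq[OF Ainc] AU by simp
  also have "\<dots> = (SUP k. \<integral>\<^sup>+y. g y * indicator (A k) y \<partial>lborel)"
  proof (rule nn_integral_monotone_convergence_SUP)
    show "incseq (\<lambda>k y. g y * indicator (A k) y)"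
    proof (intro monoI le_funI)
      fix m n :: nat and y assume "m \<le> n"
      then have "A m \<subseteq> A n" using Ainc by (simp add: incseq_def)
      then show "g y * indicator (A m) y \<le> g y * indicator (A n) y"
        by (intro mult_left_mono) (auto simp: indicator_def)
    qed
  qed (auto simp: A_def)
  also have "\<dots> = (SUP k. \<integral>\<^sup>+s. g (exp s) * ennreal (exp s) * indicator (B k) s \<partial>lborel)"
    using step by simp
  also have "\<dots> = (\<integral>\<^sup>+s. (SUP k. g (exp s) * ennreal (exp s) * indicator (B k) s) \<partial>lborel)"
  proof (rule nn_integral_monotone_convergence_SUP[symmetric])
    show "incseq (\<lambda>k s. g (exp s) * ennreal (exp s) * indicator (B k) s)"
    proof (intro monoI le_funI)
      fix m n :: nat and y assume "m \<le> n"
      then have "B m \<subseteq> B n" using Binc by (simp add: incseq_def)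
      then show "g (exp y) * ennreal (exp y) * indicator (B m) y \<le> g (exp y) * ennreal (exp y) * indicator (B n) y"
        by (intro mult_left_mono) (auto simp: indicator_def)
    qed
  qed (auto simp: B_def)
  also have "\<dots> = (\<integral>\<^sup>+s. g (exp s) * ennreal (exp s) \<partial>lborel)"
    using SUP_indicator_incseq[OF Binc] BU by simp
  finally show ?thesis .
qed

lemma MPL1:
  fixes g :: "nat \<Rightarrow> real \<Rightarrow> ennreal" and h :: "real \<Rightarrow> ennreal" and l :: "nat \<Rightarrow> real"
  assumes N: "1 \<le> N" and l: "\<forall>i<N. 0 < l i" and l1: "(\<Sum>i<N. l i) = 1"
    and gm: "\<forall>i<N. g i \<in> borel_measurable borel" and hm[measurable]: "h \<in> borel_measurable borel"
    and g0: "\<forall>i<N. \<forall>y\<le>0. g i y = 0"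
    and hyp: "\<forall>y. (\<forall>i<N. 0 < y i) \<longrightarrow> (\<Prod>i<N. g i (y i) epowr l i) \<le> h (\<Prod>i<N. y i powr l i)"
  shows "(\<Prod>i<N. (\<integral>\<^sup>+y. g i y \<partial>lborel) epowr l i) \<le> (\<integral>\<^sup>+y. h y \<partial>lborel)"
proof -
  define G where "G i s = g i (exp s) * ennreal (exp s)" for i s
  define H where "H s = h (exp s) * ennreal (exp s)" for s
  have Gm: "\<forall>i<N. G i \<in> borel_measurable borel"
  proof (intro allI impI)
    fix i assume "i < N"
    then have [measurable]: "g i \<in> borel_measurable borel" using gm by auto
    show "G i \<in> borel_measurable borel" unfolding G_def by measurable
  qed
  have Hm: "H \<in> borel_measurable borel" unfolding H_def by measurable
  have hyp': "\<forall>s. (\<Prod>i<N. G i (s i) epowr l i) \<le> H (\<Sum>i<N. l i * s i)"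
  proof
    fix s :: "nat \<Rightarrow> real"
    have "(\<Prod>i<N. G i (s i) epowr l i) = (\<Prod>i<N. g i (exp (s i)) epowr l i * ennreal (exp (l i * s i)))"
      unfolding G_def using l
      by (intro prod.cong refl) (auto simp: epowr_mult powr_def)
    also have "\<dots> = (\<Prod>i<N. g i (exp (s i)) epowr l i) * ennreal (exp (\<Sum>i<N. l i * s i))"
      by (simp add: prod.distrib prod_ennreal exp_sum)
    also have "\<dots> \<le> h (\<Prod>i<N. exp (s i) powr l i) * ennreal (exp (\<Sum>i<N. l i * s i))"
      using hyp by (intro mult_right_mono) auto
    also have "(\<Prod>i<N. exp (s i) powr l i) = exp (\<Sum>i<N. l i * s i)"
      by (simp add: powr_def exp_sum mult.commute)
    finally show "(\<Prod>i<N. G i (s i) epowr l i) \<le> H (\<Sum>i<N. l i * s i)" by (simp add: H_def)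
  qed
  have "(\<Prod>i<N. (\<integral>\<^sup>+s. G i s \<partial>lborel) epowr l i) \<le> (\<integral>\<^sup>+s. H s \<partial>lborel)"
    by (rule PL1[OF N l l1 Gm Hm hyp'])
  moreover have "(\<integral>\<^sup>+s. G i s \<partial>lborel) = (\<integral>\<^sup>+y. g i y \<partial>lborel)" if i: "i < N" for i
  proof -
    have [measurable]: "g i \<in> borel_measurable borel" using gm i by auto
    have "(\<integral>\<^sup>+y. g i y \<partial>lborel) = (\<integral>\<^sup>+y. g i y * indicator {0<..} y \<partial>lborel)"
      using g0 i by (intro nn_integral_cong) (auto simp: indicator_def not_less)
    also have "\<dots> = (\<integral>\<^sup>+s. G i s \<partial>lborel)" unfolding G_def by (rule nn_integral_exp_subst) measurable
    finally show ?thesis by simp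
  qed
  moreover have "(\<integral>\<^sup>+s. H s \<partial>lborel) \<le> (\<integral>\<^sup>+y. h y \<partial>lborel)"
  proof -
    have "(\<integral>\<^sup>+s. H s \<partial>lborel) = (\<integral>\<^sup>+y. h y * indicator {0<..} y \<partial>lborel)"
      unfolding H_def by (rule nn_integral_exp_subst[symmetric]) measurable
    also have "\<dots> \<le> (\<integral>\<^sup>+y. h y \<partial>lborel)"
      by (intro nn_integral_mono) (auto simp: indicator_def)
    finally show ?thesis .
  qed
  ultimately show ?thesis by (smt (verit) lessThan_iff order_trans prod.cong)
qed

definition comb :: "'b set \<Rightarrow> nat \<Rightarrow> (nat \<Rightarrow> real) \<Rightarrow> (nat \<Rightarrow> 'b \<Rightarrow> real) \<Rightarrow> 'b \<Rightarrow> real" where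
  "comb I N l x = (\<lambda>j. if j \<in> I then \<Prod>i<N. x i j powr l i else undefined)"

lemma comb_insert:
  assumes "k \<notin> I"
  shows "comb (insert k I) N l (\<lambda>i. (x i)(k := y i)) = (comb I N l x)(k := (\<Prod>i<N. y i powr l i))"
  using assms by (auto simp: comb_def fun_eq_iff)

lemma comb_space: "comb I N l x \<in> space (PiM I (\<lambda>_. lborel))"
  by (auto simp: comb_def space_PiM PiE_def extensional_def)

lemma MPL:
  fixes f :: "nat \<Rightarrow> ('b \<Rightarrow> real) \<Rightarrow> ennreal" and h :: "('b \<Rightarrow> real) \<Rightarrow> ennreal" and l :: "nat \<Rightarrow> real"
  assumes I: "finite I" and N: "1 \<le> N" and l: "\<forall>i<N. 0 < l i" and l1: "(\<Sum>i<N. l i) = 1"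
    and fm: "\<forall>i<N. f i \<in> borel_measurable (PiM I (\<lambda>_. lborel))"
    and hm: "h \<in> borel_measurable (PiM I (\<lambda>_. lborel))"
    and f0: "\<forall>i<N. \<forall>x. \<not> (\<forall>j\<in>I. 0 < x j) \<longrightarrow> f i x = 0"
    and hyp: "\<forall>x. (\<forall>i<N. x i \<in> space (PiM I (\<lambda>_. lborel)) \<and> (\<forall>j\<in>I. 0 < x i j))
                \<longrightarrow> (\<Prod>i<N. f i (x i) epowr l i) \<le> h (comb I N l x)"
  shows "(\<Prod>i<N. (\<integral>\<^sup>+x. f i x \<partial>PiM I (\<lambda>_. lborel)) epowr l i) \<le> (\<integral>\<^sup>+x. h x \<partial>PiM I (\<lambda>_. lborel))"
  using I fm hm f0 hyp
proof (induction I arbitrary: f h rule: finite_induct)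
  case empty
  let ?u = "(\<lambda>_. undefined) :: 'b \<Rightarrow> real"
  have "(\<Prod>i<N. f i ?u epowr l i) \<le> h (comb {} N l (\<lambda>_. ?u))"
    using empty.prems(4) by (auto simp: space_PiM)
  moreover have "comb {} N l (\<lambda>_. ?u) = ?u" by (simp add: comb_def)
  ultimately show ?case by (simp add: PiM_empty nn_integral_count_space_finite)
next
  case (insert k I)
  interpret product_sigma_finite "\<lambda>_. lborel :: real measure" by standard
  define F where "F i x = (\<integral>\<^sup>+y. f i (x(k := y)) \<partial>lborel)" for i x
  define H where "H x = (\<integral>\<^sup>+y. h (x(k := y)) \<partial>lborel)" for x
  have Fm: "\<forall>i<N. F i \<in> borel_measurable (PiM I (\<lambda>_. lborel))"
  proof (intro allI impI)
    fix i assume "i < N"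
    then have [measurable]: "f i \<in> borel_measurable (PiM (insert k I) (\<lambda>_. lborel))" using insert.prems by auto
    show "F i \<in> borel_measurable (PiM I (\<lambda>_. lborel))" unfolding F_def by measurable
  qed
  have Hm: "H \<in> borel_measurable (PiM I (\<lambda>_. lborel))"
  proof -
    have [measurable]: "h \<in> borel_measurable (PiM (insert k I) (\<lambda>_. lborel))" using insert.prems by auto
    show ?thesis unfolding H_def by measurable
  qed
  have F0: "\<forall>i<N. \<forall>x. \<not> (\<forall>j\<in>I. 0 < x j) \<longrightarrow> F i x = 0"
  proof (intro allI impI)
    fix i and x :: "'b \<Rightarrow> real" assume i: "i < N" and x: "\<not> (\<forall>j\<in>I. 0 < x j)"
    then obtain j where j: "j \<in> I" "\<not> 0 < x j" by auto
    then have "j \<noteq> k" using insert.hyps by auto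
    then have "\<not> (\<forall>j\<in>insert k I. 0 < (x(k := y)) j)" for y :: real using j by auto
    then have "f i (x(k := y)) = 0" for y :: real using insert.prems(3) i by blast
    then show "F i x = 0" unfolding F_def by simp
  qed
  have Hyp: "\<forall>x. (\<forall>i<N. x i \<in> space (PiM I (\<lambda>_. lborel)) \<and> (\<forall>j\<in>I. 0 < x i j))
                \<longrightarrow> (\<Prod>i<N. F i (x i) epowr l i) \<le> H (comb I N l x)"
  proof (intro allI impI)
    fix x :: "nat \<Rightarrow> 'b \<Rightarrow> real" assume x: "\<forall>i<N. x i \<in> space (PiM I (\<lambda>_. lborel)) \<and> (\<forall>j\<in>I. 0 < x i j)"
    show "(\<Prod>i<N. F i (x i) epowr l i) \<le> H (comb I N l x)"
      unfolding F_def H_def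
    proof (rule MPL1[OF N l l1])
      show "\<forall>i<N. (\<lambda>y. f i ((x i)(k := y))) \<in> borel_measurable borel"
      proof (intro allI impI)
        fix i assume i: "i < N"
        have [measurable]: "f i \<in> borel_measurable (PiM (insert k I) (\<lambda>_. lborel))" using insert.prems i by auto
        have "(\<lambda>y. (x i)(k := y)) \<in> measurable lborel (PiM (insert k I) (\<lambda>_. lborel))"
          using x i insert.hyps by (intro measurable_component_update) auto
        then have "(\<lambda>y. f i ((x i)(k := y))) \<in> borel_measurable lborel" by measurable
        then show "(\<lambda>y. f i ((x i)(k := y))) \<in> borel_measurable borel" by simp
      qed
      show "(\<lambda>y. h ((comb I N l x)(k := y))) \<in> borel_measurable borel"
      proof -
        have [measurable]: "h \<in> borel_measurable (PiM (insert k I) (\<lambda>_. lborel))" using insert.prems by auto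
        have "(\<lambda>y. (comb I N l x)(k := y)) \<in> measurable lborel (PiM (insert k I) (\<lambda>_. lborel))"
          using insert.hyps by (intro measurable_component_update comb_space) auto
        then have "(\<lambda>y. h ((comb I N l x)(k := y))) \<in> borel_measurable lborel" by measurable
        then show ?thesis by simp
      qed
      show "\<forall>i<N. \<forall>y\<le>0. f i ((x i)(k := y)) = 0"
        using insert.prems(3) by auto
      show "\<forall>y. (\<forall>i<N. 0 < y i) \<longrightarrow>
          (\<Prod>i<N. f i ((x i)(k := y i)) epowr l i) \<le> h ((comb I N l x)(k := \<Prod>i<N. y i powr l i))"
      proof (intro allI impI)
        fix y :: "nat \<Rightarrow> real" assume y: "\<forall>i<N. 0 < y i"
        have "(\<Prod>i<N. f i ((x i)(k := y i)) epowr l i) \<le> h (comb (insert k I) N l (\<lambda>i. (x i)(k := y i)))"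
        proof -
          have "\<forall>i<N. (x i)(k := y i) \<in> space (PiM (insert k I) (\<lambda>_. lborel)) \<and> (\<forall>j\<in>insert k I. 0 < ((x i)(k := y i)) j)"
            using x y insert.hyps by (auto simp: space_PiM PiE_def extensional_def)
          then show ?thesis by (rule insert.prems(4)[THEN spec[of _ "\<lambda>i. (x i)(k := y i)"], THEN mp])
        qed
        then show "(\<Prod>i<N. f i ((x i)(k := y i)) epowr l i) \<le> h ((comb I N l x)(k := \<Prod>i<N. y i powr l i))"
          using comb_insert[OF insert.hyps(2)] by simp
      qed
    qed
  qed
  have IH: "(\<Prod>i<N. (\<integral>\<^sup>+x. F i x \<partial>PiM I (\<lambda>_. lborel)) epowr l i) \<le> (\<integral>\<^sup>+x. H x \<partial>PiM I (\<lambda>_. lborel))"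
    by (rule insert.IH[OF Fm Hm F0 Hyp])
  have "(\<integral>\<^sup>+x. f i x \<partial>PiM (insert k I) (\<lambda>_. lborel)) = (\<integral>\<^sup>+x. F i x \<partial>PiM I (\<lambda>_. lborel))" if "i < N" for i
    unfolding F_def using insert.hyps insert.prems that by (intro product_nn_integral_insert) auto
  moreover have "(\<integral>\<^sup>+x. h x \<partial>PiM (insert k I) (\<lambda>_. lborel)) = (\<integral>\<^sup>+x. H x \<partial>PiM I (\<lambda>_. lborel))"
    unfolding H_def using insert.hyps insert.prems by (intro product_nn_integral_insert) auto
  ultimately show ?case using IH by simp
qed

lemma ereal_jensen:
  fixes W :: "'a::real_vector \<Rightarrow> ereal" and s :: "nat \<Rightarrow> 'a" and l :: "nat \<Rightarrow> real"
  assumes conv: "ereal_convex_on UNIV W" and nminf: "\<forall>t. W t \<noteq> -\<infinity>"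
    and N: "1 \<le> N" and l: "\<forall>i<N. 0 < l i" and l1: "(\<Sum>i<N. l i) = 1"
    and fin: "\<forall>i<N. W (s i) \<noteq> \<infinity>"
  shows "W (\<Sum>i<N. l i *\<^sub>R s i) \<le> ereal (\<Sum>i<N. l i * real_of_ereal (W (s i)))"
proof -
  define C where "C = {t. W t \<noteq> \<infinity>}"
  have key: "W (u *\<^sub>R x + v *\<^sub>R y) \<le> ereal (u * real_of_ereal (W x) + v * real_of_ereal (W y))"
    if x: "x \<in> C" and y: "y \<in> C" and u: "0 \<le> u" and v: "0 \<le> v" and uv: "u + v = 1" for x y u v
  proof -
    have Wx: "W x = ereal (real_of_ereal (W x))" using x nminf unfolding C_def by (cases "W x") auto
    have Wy: "W y = ereal (real_of_ereal (W y))" using y nminf unfolding C_def by (cases "W y") auto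
    consider "u = 0" | "v = 0" | "0 < u \<and> u < 1" using u v uv by fastforce
    then show ?thesis
    proof cases
      case 1
      then have "v = 1" using uv by simp
      then show ?thesis using 1 Wy by simp
    next
      case 2
      then have "u = 1" using uv by simp
      then show ?thesis using 2 Wx by simp
    next
      case 3
      have "v = 1 - u" using uv by simp
      have "W (u *\<^sub>R x + (1 - u) *\<^sub>R y) \<le> ereal u * W x + ereal (1 - u) * W y"
        using conv 3 unfolding ereal_convex_on_def by blast
      also have "\<dots> = ereal (u * real_of_ereal (W x) + (1 - u) * real_of_ereal (W y))"
        by (subst Wx, subst Wy) simp
      finally show ?thesis using \<open>v = 1 - u\<close> by simp
    qed
  qed
  have convC: "convex C"
    unfolding convex_def
  proof (intro ballI allI impI)
    fix x y and u v :: real assume "x \<in> C" "y \<in> C" "0 \<le> u" "0 \<le> v" "u + v = 1"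
    then have "W (u *\<^sub>R x + v *\<^sub>R y) \<le> ereal (u * real_of_ereal (W x) + v * real_of_ereal (W y))"
      by (intro key) auto
    then show "u *\<^sub>R x + v *\<^sub>R y \<in> C" unfolding C_def by auto
  qed
  have cvx: "convex_on C (\<lambda>t. real_of_ereal (W t))"
    unfolding convex_on_def
  proof (intro conjI convC ballI allI impI)
    fix x y and u v :: real assume h: "x \<in> C" "y \<in> C" "0 \<le> u" "0 \<le> v" "u + v = 1"
    then have le: "W (u *\<^sub>R x + v *\<^sub>R y) \<le> ereal (u * real_of_ereal (W x) + v * real_of_ereal (W y))"
      by (intro key) auto
    have "W (u *\<^sub>R x + v *\<^sub>R y) \<noteq> -\<infinity>" using nminf by auto
    with le show "real_of_ereal (W (u *\<^sub>R x + v *\<^sub>R y)) \<le> u * real_of_ereal (W x) + v * real_of_ereal (W y)"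
      by (cases "W (u *\<^sub>R x + v *\<^sub>R y)") auto
  qed
  have sC: "\<And>i. i \<in> {..<N} \<Longrightarrow> s i \<in> C" using fin unfolding C_def by auto
  have mem: "(\<Sum>i<N. l i *\<^sub>R s i) \<in> C"
    by (rule convex_sum[OF _ convC]) (use l l1 sC in auto)
  have "real_of_ereal (W (\<Sum>i<N. l i *\<^sub>R s i)) \<le> (\<Sum>i<N. l i * real_of_ereal (W (s i)))"
    by (rule convex_on_sum[OF _ _ cvx l1]) (use N l sC in \<open>auto simp: lessThan_empty_iff\<close>)
  moreover have "W (\<Sum>i<N. l i *\<^sub>R s i) = ereal (real_of_ereal (W (\<Sum>i<N. l i *\<^sub>R s i)))"
    using mem nminf unfolding C_def by (cases "W (\<Sum>i<N. l i *\<^sub>R s i)") auto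
  ultimately show ?thesis by (metis ereal_less_eq(3))
qed

lemma emb_nth:
  fixes y :: "real ^ 'n \<Rightarrow> real"
  shows "(\<Sum>b\<in>Basis. y b *\<^sub>R b) $ j = y (axis j 1)"
  by (simp add: cart_eq_inner_axis inner_sum_left_Basis)

lemma emb_measurable:
  "(\<lambda>y. \<Sum>b\<in>Basis. y b *\<^sub>R b) \<in> measurable (PiM Basis (\<lambda>_. lborel)) (borel :: (real ^ 'n) measure)"
  by measurable

lemma nn_integral_lborel_PiM:
  fixes F :: "real ^ 'n \<Rightarrow> ennreal"
  assumes [measurable]: "F \<in> borel_measurable borel"
  shows "(\<integral>\<^sup>+x. F x \<partial>lborel) = (\<integral>\<^sup>+y. F (\<Sum>b\<in>Basis. y b *\<^sub>R b) \<partial>PiM Basis (\<lambda>_. lborel))"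
  by (subst lborel_eq) (simp add: nn_integral_distr emb_measurable)

lemma borel_envelope:
  fixes u :: "'a::euclidean_space \<Rightarrow> ennreal"
  assumes u: "u \<in> borel_measurable lebesgue"
  obtains ulo uhi where "ulo \<in> borel_measurable borel" "uhi \<in> borel_measurable borel"
    "\<forall>x. ulo x \<le> u x" "\<forall>x. u x \<le> uhi x" "AE x in lborel. ulo x = u x" "AE x in lborel. uhi x = u x"
proof -
  obtain g where g: "g \<in> borel_measurable lborel" "AE x in lborel. u x = g x"
    using completion_ex_borel_measurable[OF u] by auto
  from g(2) obtain Nn where Nn: "{x \<in> space lborel. u x \<noteq> g x} \<subseteq> Nn" "emeasure lborel Nn = 0" "Nn \<in> sets lborel"
    by (rule AE_E)
  define ulo where "ulo x = (if x \<in> Nn then 0 else g x)" for x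
  define uhi where "uhi x = (if x \<in> Nn then top else g x)" for x
  have gb[measurable]: "g \<in> borel_measurable borel" using g by simp
  have Nb[measurable]: "Nn \<in> sets borel" using Nn by simp
  have "ulo \<in> borel_measurable borel" unfolding ulo_def by measurable
  moreover have "uhi \<in> borel_measurable borel" unfolding uhi_def by measurable
  moreover have "\<forall>x. ulo x \<le> u x" using Nn by (auto simp: ulo_def) (metis (mono_tags, lifting) mem_Collect_eq order_refl subsetD)
  moreover have "\<forall>x. u x \<le> uhi x" using Nn by (auto simp: uhi_def) (metis (mono_tags, lifting) mem_Collect_eq order_refl subsetD)
  moreover have ae: "AE x in lborel. x \<notin> Nn" using Nn by (intro AE_not_in) auto
  then have "AE x in lborel. ulo x = u x" by eventually_elim (use Nn(1) in \<open>force simp: ulo_def\<close>)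
  moreover have "AE x in lborel. uhi x = u x" using ae by eventually_elim (use Nn(1) in \<open>force simp: uhi_def\<close>)
  ultimately show ?thesis using that by blast
qed

lemma emexp_ereal[simp]: "emexp (ereal v) = ennreal (exp (- v))"
  by (simp add: emexp_def)

lemma emexp_top[simp]: "emexp \<infinity> = 0"
  by (simp add: emexp_def)

lemma pos_orthant_iff: "x \<in> pos_orthant \<longleftrightarrow> (\<forall>j. 0 < x $ j)"
  by (simp add: pos_orthant_def)

lemma V_jensen:
  fixes V :: "real ^ 'n \<Rightarrow> ereal" and x :: "nat \<Rightarrow> real ^ 'n" and z :: "real ^ 'n"
  assumes V_not_minf: "\<forall>x\<in>pos_orthant. V x \<noteq> -\<infinity>"
    and V_conv: "ereal_convex_on UNIV (\<lambda>t. V (\<chi> j. exp (t $ j)))"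
    and N: "1 \<le> N" and l: "\<forall>i<N. 0 < l i" and l1: "(\<Sum>i<N. l i) = 1"
    and x: "\<forall>i<N. x i \<in> pos_orthant"
    and z: "\<forall>j. z $ j = (\<Prod>i<N. (x i $ j) powr l i)"
  shows "(\<Prod>i<N. emexp (V (x i)) epowr l i) \<le> emexp (V z)"
proof (cases "\<exists>i<N. V (x i) = \<infinity>")
  case True
  then obtain k where k: "k < N" "V (x k) = \<infinity>" by auto
  then have "(\<Prod>i<N. emexp (V (x i)) epowr l i) = 0" by (intro prod_zero bexI[of _ k]) auto
  then show ?thesis by (metis zero_le)
next
  case False
  define W where "W t = V (\<chi> j. exp (t $ j))" for t :: "real ^ 'n"
  define s where "s i = (\<chi> j. ln (x i $ j))" for i
  have Wm: "\<forall>t. W t \<noteq> -\<infinity>" unfolding W_def using V_not_minf by (auto simp: pos_orthant_iff)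
  have Ws: "W (s i) = V (x i)" if "i < N" for i
  proof -
    have "(\<chi> j. exp (s i $ j)) = x i" using x that by (auto simp: s_def vec_eq_iff pos_orthant_iff)
    then show ?thesis by (simp add: W_def)
  qed
  have Wz: "W (\<Sum>i<N. l i *\<^sub>R s i) = V z"
  proof -
    have "(\<chi> j. exp ((\<Sum>i<N. l i *\<^sub>R s i) $ j)) = z"
    proof (subst vec_eq_iff, intro allI)
      fix j
      have "exp ((\<Sum>i<N. l i *\<^sub>R s i) $ j) = exp (\<Sum>i<N. l i * ln (x i $ j))"
        by (simp add: s_def sum_component)
      also have "\<dots> = (\<Prod>i<N. exp (l i * ln (x i $ j)))" by (simp add: exp_sum)
      also have "\<dots> = (\<Prod>i<N. (x i $ j) powr l i)"
        using x by (intro prod.cong refl) (auto simp: powr_def pos_orthant_iff mult.commute, metis less_irrefl)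
      finally show "(\<chi> j. exp ((\<Sum>i<N. l i *\<^sub>R s i) $ j)) $ j = z $ j" using z by simp
    qed
    then show ?thesis by (simp add: W_def)
  qed
  have fin: "\<forall>i<N. W (s i) \<noteq> \<infinity>" using False Ws by auto
  have J: "W (\<Sum>i<N. l i *\<^sub>R s i) \<le> ereal (\<Sum>i<N. l i * real_of_ereal (W (s i)))"
    by (rule ereal_jensen[OF V_conv[folded W_def] Wm N l l1 fin])
  define v where "v i = real_of_ereal (V (x i))" for i
  have Vx: "V (x i) = ereal (v i)" if "i < N" for i
    using False that V_not_minf x unfolding v_def by (cases "V (x i)") auto
  have Jz: "V z \<le> ereal (\<Sum>i<N. l i * v i)"
    using J Wz Ws by (simp add: v_def)
  have zpos: "z \<in> pos_orthant"
    using z x by (auto simp: pos_orthant_iff intro!: prod_pos, metis less_irrefl)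
  then obtain w where w: "V z = ereal w" using Jz V_not_minf by (cases "V z") auto
  with Jz have wle: "w \<le> (\<Sum>i<N. l i * v i)" by simp
  have "(\<Prod>i<N. emexp (V (x i)) epowr l i) = (\<Prod>i<N. ennreal (exp (- v i) powr l i))"
    using Vx by (intro prod.cong refl) auto
  also have "\<dots> = ennreal (\<Prod>i<N. exp (- v i) powr l i)" by (simp add: prod_ennreal)
  also have "(\<Prod>i<N. exp (- v i) powr l i) = exp (- (\<Sum>i<N. l i * v i))"
    by (simp add: powr_def exp_sum[symmetric] sum_negf[symmetric] mult.commute)
  also have "ennreal (exp (- (\<Sum>i<N. l i * v i))) \<le> ennreal (exp (- w))"
    using wle by (intro ennreal_leI) auto
  also have "\<dots> = emexp (V z)" using w by simp
  finally show ?thesis .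
qed

lemma cost_comb:
  fixes x :: "nat \<Rightarrow> real ^ 'n" and z :: "real ^ 'n"
  assumes A: "0 < A" and lam: "\<forall>i<N. lam i = (1 / \<alpha> i) / A"
    and x: "\<forall>i<N. x i \<in> pos_orthant"
    and z: "\<forall>j. z $ j = (\<Prod>i<N. (x i $ j) powr lam i)"
  shows "(\<Sum>j\<in>UNIV. (z $ j) powr A) = cost N \<alpha> x"
  unfolding cost_def
proof (intro sum.cong refl)
  fix j
  have "(z $ j) powr A = (\<Prod>i<N. ((x i $ j) powr lam i) powr A)"
    using z by (simp add: prod_powr_distrib)
  also have "\<dots> = (\<Prod>i<N. (x i $ j) powr (1 / \<alpha> i))"
    using lam A by (intro prod.cong refl) (auto simp: powr_powr)
  finally show "(z $ j) powr A = (\<Prod>i<N. (x i $ j) powr (1 / \<alpha> i))" .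
qed

lemma f_pointwise:
  fixes f :: "nat \<Rightarrow> real ^ 'n \<Rightarrow> real" and \<rho> :: "real \<Rightarrow> real" and x :: "nat \<Rightarrow> real ^ 'n" and z :: "real ^ 'n"
  assumes A: "0 < A" and lam: "\<forall>i<N. lam i = (1 / \<alpha> i) / A"
    and fnn: "\<forall>i<N. \<forall>x\<in>pos_orthant. 0 \<le> f i x"
    and hypf: "\<forall>x. (\<forall>i<N. x i \<in> pos_orthant) \<longrightarrow> (\<Prod>i<N. f i (x i) powr (1 / \<alpha> i)) \<le> \<rho> (cost N \<alpha> x)"
    and x: "\<forall>i<N. x i \<in> pos_orthant"
    and z: "\<forall>j. z $ j = (\<Prod>i<N. (x i $ j) powr lam i)"
  shows "(\<Prod>i<N. ennreal (f i (x i)) epowr lam i) \<le> ennreal (\<rho> (\<Sum>j\<in>UNIV. (z $ j) powr A) powr (1 / A))"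
proof -
  have "(\<Prod>i<N. f i (x i) powr lam i) = (\<Prod>i<N. (f i (x i) powr (1 / \<alpha> i)) powr (1 / A))"
    using lam by (intro prod.cong refl) (auto simp: powr_powr)
  also have "\<dots> = (\<Prod>i<N. f i (x i) powr (1 / \<alpha> i)) powr (1 / A)"
    by (simp add: prod_powr_distrib)
  also have "\<dots> \<le> \<rho> (cost N \<alpha> x) powr (1 / A)"
    using hypf x A by (intro powr_mono2) (auto intro: prod_nonneg)
  also have "cost N \<alpha> x = (\<Sum>j\<in>UNIV. (z $ j) powr A)"
    using cost_comb[OF A lam x z] by simp
  finally have r: "(\<Prod>i<N. f i (x i) powr lam i) \<le> \<rho> (\<Sum>j\<in>UNIV. (z $ j) powr A) powr (1 / A)" .
  have "(\<Prod>i<N. ennreal (f i (x i)) epowr lam i) = (\<Prod>i<N. ennreal (f i (x i) powr lam i))"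
    using fnn x by (intro prod.cong refl) auto
  also have "\<dots> = ennreal (\<Prod>i<N. f i (x i) powr lam i)" by (simp add: prod_ennreal)
  also have "\<dots> \<le> ennreal (\<rho> (\<Sum>j\<in>UNIV. (z $ j) powr A) powr (1 / A))"
    using r by (rule ennreal_leI)
  finally show ?thesis .
qed

lemma pos_orthant_borel[measurable]: "pos_orthant \<in> sets (borel :: (real ^ 'n) measure)"
  unfolding pos_orthant_def by measurable

lemma density_transfer:
  fixes u w :: "real ^ 'n \<Rightarrow> ennreal" and g k :: "real ^ 'n \<Rightarrow> ennreal"
  assumes um: "u \<in> borel_measurable lebesgue" and u0: "\<forall>x. x \<notin> P \<longrightarrow> u x = 0"
    and Pb[measurable]: "P \<in> sets borel" and wm[measurable]: "w \<in> borel_measurable borel"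
    and wae: "AE x in lborel. w x = u x"
    and gm[measurable]: "g \<in> borel_measurable borel" and kg: "\<forall>x\<in>P. k x = g x"
  shows "(\<integral>\<^sup>+x. k x \<partial>density lebesgue u) = (\<integral>\<^sup>+x. indicator P x * g x * w x \<partial>lborel)"
proof -
  have "(\<integral>\<^sup>+x. k x \<partial>density lebesgue u) = (\<integral>\<^sup>+x. indicator P x * g x \<partial>density lebesgue u)"
  proof (rule nn_integral_cong_AE)
    show "AE x in density lebesgue u. k x = indicator P x * g x"
      unfolding AE_density[OF um]
    proof (rule AE_I2, intro impI)
      fix x assume "0 < u x"
      then have "x \<in> P" using u0 by force
      then show "k x = indicator P x * g x" using kg by simp
    qed
  qed
  also have "\<dots> = (\<integral>\<^sup>+x. u x * (indicator P x * g x) \<partial>lebesgue)"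
  proof (rule nn_integral_density[OF um])
    have "(\<lambda>x. indicator P x * g x) \<in> borel_measurable lborel" by measurable
    then show "(\<lambda>x. indicator P x * g x) \<in> borel_measurable lebesgue" by (rule measurable_completion)
  qed
  also have "\<dots> = (\<integral>\<^sup>+x. indicator P x * g x * w x \<partial>lebesgue)"
  proof (rule nn_integral_cong_AE)
    have "AE x in lebesgue. w x = u x" using wae by (rule AE_completion)
    then show "AE x in lebesgue. u x * (indicator P x * g x) = indicator P x * g x * w x"
      by eventually_elim (simp add: ac_simps)
  qed
  also have "\<dots> = (\<integral>\<^sup>+x. indicator P x * g x * w x \<partial>lborel)"
    by (rule nn_integral_completion)
  finally show ?thesis .
qed

lemma Basis_vec_axis:
  assumes "b \<in> (Basis :: (real ^ 'n) set)"
  obtains j where "b = axis j 1"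
  using assms by (auto simp: Basis_vec_def)

lemma part1:
  fixes N :: nat and \<alpha> :: "nat \<Rightarrow> real" and V :: "real ^ 'n \<Rightarrow> ereal"
    and f :: "nat \<Rightarrow> real ^ 'n \<Rightarrow> real" and \<rho> :: "real \<Rightarrow> real"
  assumes N_pos: "N \<ge> 1"
    and \<alpha>_pos: "\<forall>i<N. 0 < \<alpha> i"
    and V_not_minf: "\<forall>x\<in>pos_orthant. V x \<noteq> -\<infinity>"
    and V_meas: "(\<lambda>x. indicator pos_orthant x * emexp (V x)) \<in> borel_measurable lebesgue"
    and V_conv: "ereal_convex_on UNIV (\<lambda>t. V (\<chi> j. exp (t $ j)))"
    and fm: "\<forall>i<N. f i \<in> borel_measurable (restrict_space borel pos_orthant) \<and> (\<forall>x\<in>pos_orthant. 0 \<le> f i x)"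
    and \<rho>m: "\<rho> \<in> borel_measurable (restrict_space borel {0<..})"
    and \<rho>0: "\<forall>s>0. 0 \<le> \<rho> s"
    and hypf: "\<forall>x. (\<forall>i<N. x i \<in> pos_orthant) \<longrightarrow> (\<Prod>i<N. f i (x i) powr (1 / \<alpha> i)) \<le> \<rho> (cost N \<alpha> x)"
    and A_def: "A = (\<Sum>i<N. 1 / \<alpha> i)"
  shows "(\<Prod>i<N. (\<integral>\<^sup>+ x. ennreal (f i x) \<partial>meas_V V) epowr (1 / \<alpha> i))
          \<le> (\<integral>\<^sup>+ t. ennreal (\<rho> (\<Sum>j\<in>UNIV. (t $ j) powr A) powr (1 / A)) \<partial>meas_V V) epowr A"
proof -
  have Apos: "0 < A" unfolding A_def using N_pos \<alpha>_pos by (intro sum_pos) (auto simp: lessThan_empty_iff)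
  define lam where "lam i = (1 / \<alpha> i) / A" for i
  have lam_pos: "\<forall>i<N. 0 < lam i" using \<alpha>_pos Apos by (auto simp: lam_def)
  have "(\<Sum>i<N. lam i) = (\<Sum>i<N. 1 / \<alpha> i) / A" unfolding lam_def by (rule sum_divide_distrib[symmetric])
  then have lam1: "(\<Sum>i<N. lam i) = 1" using Apos by (simp add: A_def[symmetric])
  have lamdef: "\<forall>i<N. lam i = (1 / \<alpha> i) / A" by (simp add: lam_def)
  define u where "u x = indicator pos_orthant x * emexp (V x)" for x
  have um: "u \<in> borel_measurable lebesgue" using V_meas by (simp add: u_def[abs_def])
  obtain ulo uhi where ulo[measurable]: "ulo \<in> borel_measurable borel" and uhi[measurable]: "uhi \<in> borel_measurable borel"
    and ulo_le: "\<forall>x. ulo x \<le> u x" and uhi_ge: "\<forall>x. u x \<le> uhi x"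
    and ulo_ae: "AE x in lborel. ulo x = u x" and uhi_ae: "AE x in lborel. uhi x = u x"
    using borel_envelope[OF um] by blast
  have u0: "\<forall>x. x \<notin> pos_orthant \<longrightarrow> u x = 0" by (simp add: u_def)
  have mV: "meas_V V = density lebesgue u" by (simp add: meas_V_def u_def[abs_def])
  define fe where "fe i x = (if x \<in> pos_orthant then f i x else 0)" for i x
  have fem[measurable]: "fe i \<in> borel_measurable borel" if "i < N" for i
  proof -
    have "f i \<in> borel_measurable (restrict_space borel pos_orthant)" using fm that by auto
    then show ?thesis unfolding fe_def[abs_def]
      by (subst (asm) measurable_restrict_space_iff) auto
  qed
  define \<rho>' where "\<rho>' s = (if s \<in> {0<..} then \<rho> s else 0)" for s
  have \<rho>'m[measurable]: "\<rho>' \<in> borel_measurable borel"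
    using \<rho>m unfolding \<rho>'_def[abs_def] by (subst (asm) measurable_restrict_space_iff) auto
  define emb :: "(real ^ 'n \<Rightarrow> real) \<Rightarrow> real ^ 'n" where "emb y = (\<Sum>b\<in>Basis. y b *\<^sub>R b)" for y
  have embm[measurable]: "emb \<in> measurable (PiM Basis (\<lambda>_. lborel)) borel"
    unfolding emb_def[abs_def] by (rule emb_measurable)
  have emb_nth': "emb y $ j = y (axis j 1)" for y j unfolding emb_def by (rule emb_nth)
  define ft where "ft i x = indicator pos_orthant x * ennreal (fe i x) * ulo x" for i x
  define ht where "ht x = indicator pos_orthant x * ennreal (\<rho>' (\<Sum>j\<in>UNIV. (x $ j) powr A) powr (1 / A)) * uhi x" for x
  have ftm[measurable]: "ft i \<in> borel_measurable borel" if "i < N" for i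
    using that unfolding ft_def[abs_def] by measurable
  have htm[measurable]: "ht \<in> borel_measurable borel"
    unfolding ht_def[abs_def] by measurable
  have sumpos: "0 < (\<Sum>j\<in>UNIV. (x $ j) powr A)" if "x \<in> pos_orthant" for x :: "real ^ 'n"
    using that by (intro sum_pos) (auto simp: pos_orthant_iff, metis less_irrefl)
  have I1: "(\<integral>\<^sup>+ x. ennreal (f i x) \<partial>meas_V V) = (\<integral>\<^sup>+ x. ft i x \<partial>lborel)" if i: "i < N" for i
  proof -
    have [measurable]: "fe i \<in> borel_measurable borel" using fem i .
    show ?thesis unfolding mV ft_def
      by (rule density_transfer[OF um u0 pos_orthant_borel ulo ulo_ae]) (measurable, auto simp: fe_def)
  qed
  have I2: "(\<integral>\<^sup>+ t. ennreal (\<rho> (\<Sum>j\<in>UNIV. (t $ j) powr A) powr (1 / A)) \<partial>meas_V V) = (\<integral>\<^sup>+ x. ht x \<partial>lborel)"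
    unfolding mV ht_def
    by (rule density_transfer[OF um u0 pos_orthant_borel uhi uhi_ae]) (measurable, auto simp: \<rho>'_def sumpos)
  have P1: "(\<integral>\<^sup>+ x. ft i x \<partial>lborel) = (\<integral>\<^sup>+ y. ft i (emb y) \<partial>PiM Basis (\<lambda>_. lborel))" if i: "i < N" for i
    unfolding emb_def using i by (intro nn_integral_lborel_PiM) measurable
  have P2: "(\<integral>\<^sup>+ x. ht x \<partial>lborel) = (\<integral>\<^sup>+ y. ht (emb y) \<partial>PiM Basis (\<lambda>_. lborel))"
    unfolding emb_def by (intro nn_integral_lborel_PiM) measurable
  have MP: "(\<Prod>i<N. (\<integral>\<^sup>+ y. ft i (emb y) \<partial>PiM Basis (\<lambda>_. lborel)) epowr lam i)
      \<le> (\<integral>\<^sup>+ y. ht (emb y) \<partial>PiM Basis (\<lambda>_. lborel))"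
  proof (rule MPL[OF finite_Basis N_pos lam_pos lam1])
    show "\<forall>i<N. (\<lambda>y. ft i (emb y)) \<in> borel_measurable (PiM Basis (\<lambda>_. lborel))"
      by measurable
    show "(\<lambda>y. ht (emb y)) \<in> borel_measurable (PiM Basis (\<lambda>_. lborel))"
      by measurable
    show "\<forall>i<N. \<forall>y. \<not> (\<forall>b\<in>Basis. 0 < y b) \<longrightarrow> ft i (emb y) = 0"
    proof (intro allI impI)
      fix i and y :: "real ^ 'n \<Rightarrow> real" assume "\<not> (\<forall>b\<in>(Basis :: (real ^ 'n) set). 0 < y b)"
      then obtain b where b: "b \<in> (Basis :: (real ^ 'n) set)" "\<not> 0 < y b" by auto
      obtain j where "b = axis j 1" using b(1) by (rule Basis_vec_axis)
      then have "\<not> 0 < emb y $ j" using b by (simp add: emb_nth')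
      then have "emb y \<notin> pos_orthant" by (auto simp: pos_orthant_iff)
      then show "ft i (emb y) = 0" by (simp add: ft_def)
    qed
    show "\<forall>x. (\<forall>i<N. x i \<in> space (PiM Basis (\<lambda>_. lborel)) \<and> (\<forall>j\<in>Basis. 0 < x i j))
       \<longrightarrow> (\<Prod>i<N. ft i (emb (x i)) epowr lam i) \<le> ht (emb (comb Basis N lam x))"
    proof (intro allI impI)
      fix x :: "nat \<Rightarrow> real ^ 'n \<Rightarrow> real"
      assume x: "\<forall>i<N. x i \<in> space (PiM Basis (\<lambda>_. lborel)) \<and> (\<forall>j\<in>Basis. 0 < x i j)"
      define X where "X i = emb (x i)" for i
      define Z where "Z = emb (comb Basis N lam x)"
      have Xpos: "\<forall>i<N. X i \<in> pos_orthant"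
        using x by (auto simp: X_def pos_orthant_iff emb_nth')
      have Zj: "\<forall>j. Z $ j = (\<Prod>i<N. (X i $ j) powr lam i)"
        by (auto simp: Z_def X_def emb_nth' comb_def)
      have Zpos: "Z \<in> pos_orthant"
        using Zj Xpos by (auto simp: pos_orthant_iff intro!: prod_pos) (metis less_irrefl)
      have "(\<Prod>i<N. ft i (X i) epowr lam i) = (\<Prod>i<N. ennreal (f i (X i)) epowr lam i * ulo (X i) epowr lam i)"
        using Xpos lam_pos by (intro prod.cong refl) (auto simp: ft_def fe_def epowr_mult)
      also have "\<dots> = (\<Prod>i<N. ennreal (f i (X i)) epowr lam i) * (\<Prod>i<N. ulo (X i) epowr lam i)"
        by (simp add: prod.distrib)
      also have "\<dots> \<le> ennreal (\<rho> (\<Sum>j\<in>UNIV. (Z $ j) powr A) powr (1 / A)) * emexp (V Z)"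
      proof (rule mult_mono)
        show "(\<Prod>i<N. ennreal (f i (X i)) epowr lam i) \<le> ennreal (\<rho> (\<Sum>j\<in>UNIV. (Z $ j) powr A) powr (1 / A))"
          using fm hypf by (intro f_pointwise[OF Apos lamdef _ _ Xpos Zj]) auto
        have "(\<Prod>i<N. ulo (X i) epowr lam i) \<le> (\<Prod>i<N. emexp (V (X i)) epowr lam i)"
        proof (intro prod_epowr_mono ballI)
          fix i assume "i \<in> {..<N}"
          then have "X i \<in> pos_orthant" using Xpos by auto
          then show "ulo (X i) \<le> emexp (V (X i))" using ulo_le[rule_format, of "X i"] by (simp add: u_def)
        qed (use lam_pos in auto)
        also have "\<dots> \<le> emexp (V Z)"
          by (rule V_jensen[OF V_not_minf V_conv N_pos lam_pos lam1 Xpos Zj])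
        finally show "(\<Prod>i<N. ulo (X i) epowr lam i) \<le> emexp (V Z)" .
      qed auto
      also have "\<dots> \<le> ht Z"
      proof -
        have "emexp (V Z) \<le> uhi Z" using uhi_ge[rule_format, of Z] Zpos by (simp add: u_def)
        moreover have "\<rho>' (\<Sum>j\<in>UNIV. (Z $ j) powr A) = \<rho> (\<Sum>j\<in>UNIV. (Z $ j) powr A)"
          using sumpos[OF Zpos] by (simp add: \<rho>'_def)
        ultimately show ?thesis using Zpos by (auto simp: ht_def intro: mult_left_mono)
      qed
      finally show "(\<Prod>i<N. ft i (emb (x i)) epowr lam i) \<le> ht (emb (comb Basis N lam x))"
        by (simp add: X_def Z_def)
    qed
  qed
  have main: "(\<Prod>i<N. (\<integral>\<^sup>+ x. ennreal (f i x) \<partial>meas_V V) epowr lam i)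
      \<le> (\<integral>\<^sup>+ t. ennreal (\<rho> (\<Sum>j\<in>UNIV. (t $ j) powr A) powr (1 / A)) \<partial>meas_V V)"
    using MP I1 P1 I2 P2 by simp
  have "(\<Prod>i<N. (\<integral>\<^sup>+ x. ennreal (f i x) \<partial>meas_V V) epowr (1 / \<alpha> i))
      = (\<Prod>i<N. ((\<integral>\<^sup>+ x. ennreal (f i x) \<partial>meas_V V) epowr lam i) epowr A)"
    using lam_pos Apos by (intro prod.cong refl) (auto simp: epowr_epowr lam_def)
  also have "\<dots> = (\<Prod>i<N. (\<integral>\<^sup>+ x. ennreal (f i x) \<partial>meas_V V) epowr lam i) epowr A"
    using Apos by (simp add: prod_epowr)
  also have "\<dots> \<le> (\<integral>\<^sup>+ t. ennreal (\<rho> (\<Sum>j\<in>UNIV. (t $ j) powr A) powr (1 / A)) \<partial>meas_V V) epowr A"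
    using main Apos by (intro epowr_mono) auto
  finally show ?thesis .
qed

lemma emexp_measurable[measurable]: "emexp \<in> borel_measurable borel"
  unfolding emexp_def[abs_def] by measurable

lemma part2:
  fixes N :: nat and \<alpha> :: "nat \<Rightarrow> real" and V :: "real ^ 'n \<Rightarrow> ereal"
    and W :: "nat \<Rightarrow> real ^ 'n \<Rightarrow> ereal"
  assumes N_pos: "N \<ge> 1"
    and \<alpha>_pos: "\<forall>i<N. 0 < \<alpha> i"
    and V_not_minf: "\<forall>x\<in>pos_orthant. V x \<noteq> -\<infinity>"
    and V_meas: "(\<lambda>x. indicator pos_orthant x * emexp (V x)) \<in> borel_measurable lebesgue"
    and V_conv: "ereal_convex_on UNIV (\<lambda>t. V (\<chi> j. exp (t $ j)))"
    and Wm: "\<forall>i<N. W i \<in> borel_measurable (restrict_space borel pos_orthant) \<and> (\<forall>x\<in>pos_orthant. W i x \<noteq> -\<infinity>)"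
    and hypW: "\<forall>x. (\<forall>i<N. x i \<in> pos_orthant) \<longrightarrow> (\<Sum>i<N. W i (x i)) \<ge> ereal (cost N \<alpha> x)"
    and A_def: "A = (\<Sum>i<N. 1 / \<alpha> i)"
  shows "(\<Prod>i<N. (\<integral>\<^sup>+ x. emexp (ereal (\<alpha> i) * W i x) \<partial>meas_V V) epowr (1 / \<alpha> i))
          \<le> (\<integral>\<^sup>+ t. ennreal (exp (- (1 / A) * (\<Sum>j\<in>UNIV. (t $ j) powr A))) \<partial>meas_V V) epowr A"
proof -
  define f where "f i x = enn2real (emexp (ereal (\<alpha> i) * W i x))" for i x
  define \<rho> :: "real \<Rightarrow> real" where "\<rho> s = exp (- s)" for s
  have fm: "\<forall>i<N. f i \<in> borel_measurable (restrict_space borel pos_orthant) \<and> (\<forall>x\<in>pos_orthant. 0 \<le> f i x)"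
  proof (intro allI impI conjI ballI)
    fix i assume "i < N"
    then have [measurable]: "W i \<in> borel_measurable (restrict_space borel pos_orthant)" using Wm by auto
    show "f i \<in> borel_measurable (restrict_space borel pos_orthant)" unfolding f_def[abs_def] by measurable
  qed (simp add: f_def)
  have \<rho>m: "\<rho> \<in> borel_measurable (restrict_space borel {0<..})"
    unfolding \<rho>_def[abs_def] by (intro measurable_restrict_space1) measurable
  have \<rho>0: "\<forall>s>0. 0 \<le> \<rho> s" by (simp add: \<rho>_def)
  have hypf: "\<forall>x. (\<forall>i<N. x i \<in> pos_orthant) \<longrightarrow> (\<Prod>i<N. f i (x i) powr (1 / \<alpha> i)) \<le> \<rho> (cost N \<alpha> x)"
  proof (intro allI impI)
    fix x :: "nat \<Rightarrow> real ^ 'n" assume x: "\<forall>i<N. x i \<in> pos_orthant"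
    show "(\<Prod>i<N. f i (x i) powr (1 / \<alpha> i)) \<le> \<rho> (cost N \<alpha> x)"
    proof (cases "\<exists>i<N. W i (x i) = \<infinity>")
      case True
      then obtain k where k: "k < N" "W k (x k) = \<infinity>" by auto
      then have "f k (x k) = 0" using \<alpha>_pos k(1) by (simp add: f_def less_imp_neq[symmetric])
      then have "(\<Prod>i<N. f i (x i) powr (1 / \<alpha> i)) = 0" using k by (intro prod_zero bexI[of _ k]) auto
      then show ?thesis unfolding \<rho>_def by (metis exp_ge_zero)
    next
      case False
      define w where "w i = real_of_ereal (W i (x i))" for i
      have Ww: "W i (x i) = ereal (w i)" if "i < N" for i
        using False Wm x that unfolding w_def by (cases "W i (x i)") auto
      have fw: "f i (x i) powr (1 / \<alpha> i) = exp (- w i)" if i: "i < N" for i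
      proof -
        have "f i (x i) = exp (- (\<alpha> i * w i))" using Ww[OF i] by (simp add: f_def)
        then show ?thesis using \<alpha>_pos i by (simp add: powr_def less_imp_neq[symmetric])
      qed
      have "(\<Prod>i<N. f i (x i) powr (1 / \<alpha> i)) = (\<Prod>i<N. exp (- w i))" using fw by simp
      also have "\<dots> = exp (- (\<Sum>i<N. w i))" by (simp add: exp_sum[symmetric] sum_negf)
      also have "\<dots> \<le> exp (- cost N \<alpha> x)"
      proof -
        have "ereal (cost N \<alpha> x) \<le> (\<Sum>i<N. W i (x i))" using hypW x by auto
        also have "(\<Sum>i<N. W i (x i)) = (\<Sum>i<N. ereal (w i))" using Ww by (intro sum.cong) auto
        also have "\<dots> = ereal (\<Sum>i<N. w i)" by (rule sum_ereal)
        finally show ?thesis by simp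
      qed
      finally show ?thesis by (simp add: \<rho>_def)
    qed
  qed
  have P: "(\<Prod>i<N. (\<integral>\<^sup>+ x. ennreal (f i x) \<partial>meas_V V) epowr (1 / \<alpha> i))
          \<le> (\<integral>\<^sup>+ t. ennreal (\<rho> (\<Sum>j\<in>UNIV. (t $ j) powr A) powr (1 / A)) \<partial>meas_V V) epowr A"
    by (rule part1[OF N_pos \<alpha>_pos V_not_minf V_meas V_conv fm \<rho>m \<rho>0 hypf A_def])
  have AEpos: "AE x in meas_V V. x \<in> pos_orthant"
    unfolding meas_V_def AE_density[OF V_meas] by (rule AE_I2) (auto simp: indicator_def)
  have eq1: "(\<integral>\<^sup>+ x. ennreal (f i x) \<partial>meas_V V) = (\<integral>\<^sup>+ x. emexp (ereal (\<alpha> i) * W i x) \<partial>meas_V V)"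
    if i: "i < N" for i
  proof (rule nn_integral_cong_AE)
    show "AE x in meas_V V. ennreal (f i x) = emexp (ereal (\<alpha> i) * W i x)"
      using AEpos
    proof eventually_elim
      case (elim x)
      then have "W i x \<noteq> -\<infinity>" using Wm i by auto
      then have "ereal (\<alpha> i) * W i x \<noteq> -\<infinity>" using \<alpha>_pos i by (cases "W i x") auto
      then have "emexp (ereal (\<alpha> i) * W i x) \<noteq> top" by (simp add: emexp_def)
      then show ?case by (simp add: f_def less_top)
    qed
  qed
  have eq2: "(\<integral>\<^sup>+ t. ennreal (\<rho> (\<Sum>j\<in>UNIV. (t $ j) powr A) powr (1 / A)) \<partial>meas_V V)
      = (\<integral>\<^sup>+ t. ennreal (exp (- (1 / A) * (\<Sum>j\<in>UNIV. (t $ j) powr A))) \<partial>meas_V V)"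
    by (intro nn_integral_cong) (simp add: \<rho>_def powr_def)
  have eqprod: "(\<Prod>i<N. (\<integral>\<^sup>+ x. emexp (ereal (\<alpha> i) * W i x) \<partial>meas_V V) epowr (1 / \<alpha> i))
      = (\<Prod>i<N. (\<integral>\<^sup>+ x. ennreal (f i x) \<partial>meas_V V) epowr (1 / \<alpha> i))"
    using eq1 by (intro prod.cong refl) simp
  show ?thesis unfolding eqprod eq2[symmetric] by (rule P)
qed

theorem proposition6p1:
  fixes N :: nat and \<alpha> :: "nat \<Rightarrow> real" and V :: "real ^ 'n \<Rightarrow> ereal"
  assumes N_pos: "N \<ge> 1"
    and \<alpha>_pos: "\<forall>i<N. 0 < \<alpha> i"
    and V_not_minf: "\<forall>x\<in>pos_orthant. V x \<noteq> -\<infinity>"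
    and V_meas: "(\<lambda>x. indicator pos_orthant x * emexp (V x)) \<in> borel_measurable lebesgue"
    and V_conv: "ereal_convex_on UNIV (\<lambda>t. V (\<chi> j. exp (t $ j)))"
  defines "A \<equiv> (\<Sum>i<N. 1 / \<alpha> i)"
    and "m \<equiv> meas_V V"
  shows
    "(\<forall>(f :: nat \<Rightarrow> real ^ 'n \<Rightarrow> real) (\<rho> :: real \<Rightarrow> real).
        (\<forall>i<N. f i \<in> borel_measurable (restrict_space borel pos_orthant)
               \<and> (\<forall>x\<in>pos_orthant. 0 \<le> f i x)) \<and>
        \<rho> \<in> borel_measurable (restrict_space borel {0<..}) \<and>
        (\<forall>s>0. 0 \<le> \<rho> s) \<and>
        (\<forall>x. (\<forall>i<N. x i \<in> pos_orthant) \<longrightarrow>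
              (\<Prod>i<N. f i (x i) powr (1 / \<alpha> i)) \<le> \<rho> (cost N \<alpha> x))
      \<longrightarrow>
        (\<Prod>i<N. (\<integral>\<^sup>+ x. ennreal (f i x) \<partial>m) epowr (1 / \<alpha> i))
          \<le> (\<integral>\<^sup>+ t. ennreal (\<rho> (\<Sum>j\<in>UNIV. (t $ j) powr A) powr (1 / A)) \<partial>m) epowr A)
     \<and>
     (\<forall>W :: nat \<Rightarrow> real ^ 'n \<Rightarrow> ereal.
        (\<forall>i<N. W i \<in> borel_measurable (restrict_space borel pos_orthant)
               \<and> (\<forall>x\<in>pos_orthant. W i x \<noteq> -\<infinity>)) \<and>
        (\<forall>x. (\<forall>i<N. x i \<in> pos_orthant) \<longrightarrow>
              (\<Sum>i<N. W i (x i)) \<ge> ereal (cost N \<alpha> x))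
      \<longrightarrow>
        (\<Prod>i<N. (\<integral>\<^sup>+ x. emexp (ereal (\<alpha> i) * W i x) \<partial>m) epowr (1 / \<alpha> i))
          \<le> (\<integral>\<^sup>+ t. ennreal (exp (- (1 / A) * (\<Sum>j\<in>UNIV. (t $ j) powr A))) \<partial>m) epowr A)"
proof (intro conjI allI impI)
  fix f :: "nat \<Rightarrow> real ^ 'n \<Rightarrow> real" and \<rho> :: "real \<Rightarrow> real"
  assume H: "(\<forall>i<N. f i \<in> borel_measurable (restrict_space borel pos_orthant)
               \<and> (\<forall>x\<in>pos_orthant. 0 \<le> f i x)) \<and>
        \<rho> \<in> borel_measurable (restrict_space borel {0<..}) \<and>
        (\<forall>s>0. 0 \<le> \<rho> s) \<and>
        (\<forall>x. (\<forall>i<N. x i \<in> pos_orthant) \<longrightarrow>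
              (\<Prod>i<N. f i (x i) powr (1 / \<alpha> i)) \<le> \<rho> (cost N \<alpha> x))"
  show "(\<Prod>i<N. (\<integral>\<^sup>+ x. ennreal (f i x) \<partial>m) epowr (1 / \<alpha> i))
          \<le> (\<integral>\<^sup>+ t. ennreal (\<rho> (\<Sum>j\<in>UNIV. (t $ j) powr A) powr (1 / A)) \<partial>m) epowr A"
    unfolding m_def
    by (rule part1[OF N_pos \<alpha>_pos V_not_minf V_meas V_conv]) (use H A_def in auto)
next
  fix W :: "nat \<Rightarrow> real ^ 'n \<Rightarrow> ereal"
  assume H: "(\<forall>i<N. W i \<in> borel_measurable (restrict_space borel pos_orthant)
               \<and> (\<forall>x\<in>pos_orthant. W i x \<noteq> -\<infinity>)) \<and>
        (\<forall>x. (\<forall>i<N. x i \<in> pos_orthant) \<longrightarrow>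
              (\<Sum>i<N. W i (x i)) \<ge> ereal (cost N \<alpha> x))"
  show "(\<Prod>i<N. (\<integral>\<^sup>+ x. emexp (ereal (\<alpha> i) * W i x) \<partial>m) epowr (1 / \<alpha> i))
          \<le> (\<integral>\<^sup>+ t. ennreal (exp (- (1 / A) * (\<Sum>j\<in>UNIV. (t $ j) powr A))) \<partial>m) epowr A"
    unfolding m_def
    by (rule part2[OF N_pos \<alpha>_pos V_not_minf V_meas V_conv]) (use H A_def in auto)
qed

end
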